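(* Let $N\ge1$, $R>0$, $m>1$ with $N>m$, $p>1$, $\gamma\in(0,m-1)$, $\alpha,\beta\in\mathbb R$ with $N+\alpha-m>0$, $\beta-\alpha+1>0$, and $m-1<p<m^*_{\alpha,\beta}-1$ where $m^*_{\alpha,\beta}=\frac{m(N+\beta)}{N+\alpha-m}$. Let $g:[0,\infty)\to[0,\infty)$ be continuous, nondecreasing with $\lim_{v\to\infty}g(v)/v=1$, and let $a:[0,\infty)\to(0,\infty)$ be continuous with $c_1\le a\le c_2$ for constants $0<c_1\le c_2$. Fix $q>p$ and define $h(t)=t^{q-p}$ for $t\ge1$, $h(t)=1$ for $0\le t\le1$. For $k\in\mathbb N$ let $g_k(s)=g(\min\{k,s\})$ for $s\ge0$. Then for each $k\in\mathbb N$ there is a positive constant $C_k$ depending only on $k$ such that, for every $\xi\ge0$, every positive solution $v$ of $$-\Big(\frac{r^{N+\alpha-1}|v'(r)|^{m-2}v'(r)}{(a(r)+g_k(v(r)))^\gamma}\Big)'=r^{N+\beta-1}\Big(v^p(r)+\frac{\xi}{h(\|v\|_\infty)}\Big),\ 0<r<R,\qquad v'(0)=0,\ v(R)=0,$$ satisfies $\|v\|_\infty\le C_k$.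
   Context: $\|v\|_\infty=\sup_{[0,R]}|v|$. A positive solution is a function $v$, positive on $[0,R)$, with $v\in C^1[0,R)\cap C[0,R]$, whose flux $r^{N+\alpha-1}|v'|^{m-2}v'(a+g_k(v))^{-\gamma}$ is $C^1$ on $(0,R)$, satisfying the equation and boundary conditions. *)

theory Defs
  imports "HOL-Analysis.Analysis"
begin

definition gtrunc :: "(real \<Rightarrow> real) \<Rightarrow> real \<Rightarrow> real \<Rightarrow> real" where
  "gtrunc g k s = g (min k s)"

definition hfun :: "real \<Rightarrow> real \<Rightarrow> real \<Rightarrow> real" where
  "hfun q p t = (if t \<ge> 1 then t powr (q - p) else 1)"

definition supnorm :: "real \<Rightarrow> (real \<Rightarrow> real) \<Rightarrow> real" where
  "supnorm R v = Sup ((\<lambda>r. \<bar>v r\<bar>) ` {0..R})"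

definition positive_solution ::
  "nat \<Rightarrow> real \<Rightarrow> real \<Rightarrow> real \<Rightarrow> real \<Rightarrow> real \<Rightarrow> real \<Rightarrow> real \<Rightarrow>
   (real \<Rightarrow> real) \<Rightarrow> (real \<Rightarrow> real) \<Rightarrow> real \<Rightarrow> real \<Rightarrow> (real \<Rightarrow> real) \<Rightarrow> bool" where
  "positive_solution N R m p \<gamma> \<alpha> \<beta> q a g k \<xi> v \<longleftrightarrow>
     (\<forall>r\<in>{0..<R}. v r > 0) \<and>
     continuous_on {0..R} v \<and>
     (\<exists>vd F'.
        (\<forall>r\<in>{0..<R}. (v has_real_derivative vd r) (at r within {0..<R})) \<and>
        continuous_on {0..<R} vd \<and>
        (let F = (\<lambda>r. r powr (real N + \<alpha> - 1) * (\<bar>vd r\<bar> powr (m - 2) * vd r)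
                        / (a r + gtrunc g k (v r)) powr \<gamma>) in
          (\<forall>r\<in>{0<..<R}. (F has_real_derivative F' r) (at r)) \<and>
          continuous_on {0<..<R} F' \<and>
          (\<forall>r\<in>{0<..<R}. - F' r = r powr (real N + \<beta> - 1) *
               (v r powr p + \<xi> / hfun q p (supnorm R v)))) \<and>
        vd 0 = 0) \<and>
     v R = 0"

end

theory Submission
  imports Defs
begin


lemma incr_from_deriv:
  fixes f f' :: "real \<Rightarrow> real"
  assumes "a \<le> b" "continuous_on {a..b} f"
    "\<And>x. a < x \<Longrightarrow> x < b \<Longrightarrow> (f has_real_derivative f' x) (at x)"
    "\<And>x. a < x \<Longrightarrow> x < b \<Longrightarrow> f' x \<ge> 0"
  shows "f a \<le> f b"
  using DERIV_nonneg_imp_increasing_open[OF assms(1) _ assms(2)] assms(3,4) by blast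

lemma powK_small:
  fixes C \<zeta> \<delta> K :: real
  assumes "0 \<le> C" "0 < \<zeta>" "0 < \<delta>" "0 < K" "K \<ge> (C/\<delta>) powr (1/\<zeta>)"
  shows "C * K powr (-\<zeta>) \<le> \<delta>"
proof -
  have "((C/\<delta>) powr (1/\<zeta>)) powr \<zeta> \<le> K powr \<zeta>"
    using assms by (intro powr_mono2) auto
  also have "((C/\<delta>) powr (1/\<zeta>)) powr \<zeta> = C/\<delta>"
    using assms by (simp add: powr_powr)
  finally have "C/\<delta> \<le> K powr \<zeta>" .
  then have "C \<le> \<delta> * K powr \<zeta>" using assms by (simp add: field_simps)
  then show ?thesis using assms by (simp add: powr_minus field_simps)
qed

lemma PD_alg:
  fixes c d q1 mi m n U V Y X Q F W Fp b utd :: real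
  assumes H: "utd * X * Y = q1 * U * (Q*F*X + (1-n)*Y)" and c: "c = (m-1)*mi" and d: "d = (n-m)*mi"
    and q: "q1*(m-1) = 1" and mm: "m*mi = 1"
  shows "((c * 1 * U + utd * (c * X)) * Y + (Q*F) * (c * X * U)) +
      ((b * Q) * Fp + (F * (- V)) * (X*Q)) - ((d * (- V)) * Y + (Q*F) * (d * W))
     = Q * (b * Fp - d * W * F) + (U - V) * ((X*Q) * F - d * Y)"
  using assms by algebra
lemma alg2: "(p::real) + 1 \<noteq> 0 \<Longrightarrow> b*(t*P/(p+1) + (1-t)*w) - d*(t*P + (1-t)*w) = t*P*(b/(p+1) - d) + (1-t)*w*(b-d)"
  by (simp add: field_simps)

lemma deriv_pow_div:
  fixes c e s :: real
  assumes "0 < s" "e \<noteq> 0"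
  shows "((\<lambda>s. c * s powr e / e) has_real_derivative c * s powr (e-1)) (at s)"
proof -
  have "((\<lambda>s. s powr e) has_real_derivative e * s powr (e-1)) (at s)"
    by (rule has_real_derivative_powr) fact
  then have "((\<lambda>s. c * s powr e / e) has_real_derivative c * (e * s powr (e-1)) / e) (at s)"
    by (intro DERIV_cdivide DERIV_cmult)
  then show ?thesis using assms by simp
qed

context
  fixes n m b p Dlo Dhi D0 :: real
  assumes m1: "1 < m" and nm: "m < n" and bn: "0 < b - n + 1" and pm: "m - 1 < p"
    and crit: "(p+1)*(n-m) < m*b" and Dlo: "0 < Dlo" "Dlo \<le> Dhi" and D0: "0 < D0"
begin

lemma bpos: "0 < b" using m1 nm bn by linarith
lemma ppos: "0 < p" using m1 pm by linarith

definition q1 where "q1 = 1/(m-1)"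
definition th where "th = (b-n+1)/(m-1)"
definition sg where "sg = p/(m-1)"
definition Cu where "Cu = (Dhi/b) powr q1"
definition cw where "cw = (Dlo/b) powr q1"

definition ka where "ka = (th+1)/(sg-1)"
definition Cd where "Cd = ((sg-1)*cw/(th+1)) powr (-1/(sg-1))"
definition A0 where "A0 = b/(p+1) - (n-m)/m"
definition EK where "EK K = (D0/b) powr q1 * K powr th * (K powr b * (1 + (n-m)/(m*b)))"
lemma q1_pos: "0 < q1" using m1 by (simp add: q1_def)
lemma th_pos: "0 < th" using m1 bn by (simp add: th_def)
lemma sg_gt1: "1 < sg" using m1 pm by (simp add: sg_def)
lemma sg_eq: "sg = p * q1" by (simp add: sg_def q1_def)
lemma th_eq: "th = (b-n+1) * q1" by (simp add: th_def q1_def)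

lemma pow_rewrite: "(c * x powr b * x powr (1-n)) powr q1 = c powr q1 * x powr th"
  if "0 \<le> c" "0 < x" for c x :: real
proof -
  have e: "b + (1-n) = b-n+1" by simp
  have eq: "c * x powr b * x powr (1-n) = c * x powr (b-n+1)" by (simp only: mult.assoc powr_add[symmetric] e)
  have "(c * x powr b * x powr (1-n)) powr q1 = (c * x powr (b-n+1)) powr q1" by (simp only: eq)
  also have "\<dots> = c powr q1 * x powr th" by (simp only: powr_mult powr_powr th_eq)
  finally show ?thesis .
qed

lemma A0_pos: "0 < A0"
proof -
  have "(n-m)/m < b/(p+1)" using crit m1 ppos by (simp add: field_simps)
  then show ?thesis by (simp add: A0_def)
qed

lemma A0_le: "A0 \<le> b - (n-m)/m"
proof -
  have "b/(p+1) \<le> b" using bpos ppos by (simp add: field_simps)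
  then show ?thesis by (simp add: A0_def)
qed

definition SH :: "real \<Rightarrow> real \<Rightarrow> (real \<Rightarrow> real) \<Rightarrow> (real \<Rightarrow> real) \<Rightarrow> (real \<Rightarrow> real) \<Rightarrow> (real \<Rightarrow> real) \<Rightarrow> bool"
  where "SH t L w y u D \<longleftrightarrow> 0 < L \<and> 0 < t \<and> t \<le> 1 \<and> continuous_on {0..<L} w \<and> w 0 = 1 \<and>
    (\<forall>x\<in>{0..<L}. 0 < w x \<and> w x \<le> 1) \<and> (\<forall>x\<in>{0<..<L}. (w has_real_derivative - u x) (at x)) \<and>
    continuous_on {0..<L} y \<and> y 0 = 0 \<and>
    (\<forall>x\<in>{0<..<L}. (y has_real_derivative x powr (b-1) * (t * w x powr p + (1-t))) (at x)) \<and>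
    (\<forall>x\<in>{0<..<L}. u x = (D x * y x * x powr (1-n)) powr (1/(m-1))) \<and>
    (\<forall>x\<in>{0<..<L}. Dlo \<le> D x \<and> D x \<le> Dhi)"

context
  fixes t L w y u D
  assumes sh: "SH t L w y u D"
begin

lemma sh_L: "0 < L" and sh_t: "0 < t" "t \<le> 1" and sh_wc: "continuous_on {0..<L} w" and sh_w0: "w 0 = 1"
  and sh_wb: "\<And>x. 0 \<le> x \<Longrightarrow> x < L \<Longrightarrow> 0 < w x \<and> w x \<le> 1"
  and sh_wd: "\<And>x. 0 < x \<Longrightarrow> x < L \<Longrightarrow> (w has_real_derivative - u x) (at x)"
  and sh_yc: "continuous_on {0..<L} y" and sh_y0: "y 0 = 0"
  and sh_yd: "\<And>x. 0 < x \<Longrightarrow> x < L \<Longrightarrow> (y has_real_derivative x powr (b-1) * (t * w x powr p + (1-t))) (at x)"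
  and sh_u: "\<And>x. 0 < x \<Longrightarrow> x < L \<Longrightarrow> u x = (D x * y x * x powr (1-n)) powr (1/(m-1))"
  and sh_D: "\<And>x. 0 < x \<Longrightarrow> x < L \<Longrightarrow> Dlo \<le> D x \<and> D x \<le> Dhi"
  using sh unfolding SH_def by auto

lemma u_nonneg: "0 \<le> u x" if "0 < x" "x < L" using sh_u[OF that] by simp

lemma w_anti: assumes "0 \<le> x" "x \<le> x'" "x' < L" shows "w x' \<le> w x"
proof -
  have "(\<lambda>s. - w s) x \<le> (\<lambda>s. - w s) x'"
  proof (rule incr_from_deriv[where f="\<lambda>s. - w s" and f'=u])
    show "continuous_on {x..x'} (\<lambda>s. - w s)"
      using assms by (intro continuous_intros continuous_on_subset[OF sh_wc]) auto
    show "((\<lambda>s. - w s) has_real_derivative u s) (at s)" if "x < s" "s < x'" for s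
      using sh_wd[of s] that assms by (auto intro!: derivative_eq_intros)
    show "0 \<le> u s" if "x < s" "s < x'" for s using u_nonneg[of s] that assms by auto
  qed (use assms in auto)
  then show ?thesis by simp
qed

lemma wp_le1: "w x powr p \<le> 1" if "0 \<le> x" "x < L"
  using sh_wb[OF that] ppos by (intro powr_le1) auto

lemma f_le1: "t * w x powr p + (1-t) \<le> 1" if "0 \<le> x" "x < L"
proof -
  have "t * w x powr p \<le> t * 1" using sh_t wp_le1[OF that] by (intro mult_left_mono) auto
  then show ?thesis by simp
qed

lemma f_ge: "t * w x powr p + (1-t) \<ge> w x powr p" "t * w x powr p + (1-t) \<ge> 1 - t" if "0 \<le> x" "x < L"
proof -
  have "(1-t) * (1 - w x powr p) \<ge> 0" using sh_t wp_le1[OF that] by (intro mult_nonneg_nonneg) auto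
  then show "t * w x powr p + (1-t) \<ge> w x powr p" by (simp add: algebra_simps)
  show "t * w x powr p + (1-t) \<ge> 1 - t" using sh_t by simp
qed

lemma cont_pow: "continuous_on {a..c} (\<lambda>s. s powr e)" if "0 < e" "0 \<le> a" for a c e :: real
  using that by (intro continuous_on_powr' continuous_intros) auto


lemma y_upper: "y x \<le> x powr b / b" if "0 \<le> x" "x < L"
proof -
  have "(\<lambda>s. s powr b / b - y s) 0 \<le> (\<lambda>s. s powr b / b - y s) x"
  proof (rule incr_from_deriv[where f="\<lambda>s. s powr b / b - y s" and f'="\<lambda>s. s powr (b-1) - s powr (b-1) * (t * w s powr p + (1-t))"])
    show "continuous_on {0..x} (\<lambda>s. s powr b / b - y s)"
      using that bpos by (intro continuous_intros cont_pow continuous_on_subset[OF sh_yc]) auto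
    show "((\<lambda>s. s powr b / b - y s) has_real_derivative s powr (b-1) - s powr (b-1) * (t * w s powr p + (1-t))) (at s)"
      if "0 < s" "s < x" for s
      using sh_yd[of s] that \<open>x < L\<close> bpos
      by (auto intro!: derivative_eq_intros simp: field_simps)
    show "0 \<le> s powr (b-1) - s powr (b-1) * (t * w s powr p + (1-t))" if "0 < s" "s < x" for s
      using f_le1[of s] that \<open>x < L\<close> by (simp add: mult_left_le)
  qed (use that in auto)
  then show ?thesis using sh_y0 bpos by simp
qed

lemma y_lower_w: "y x \<ge> x powr b * w x powr p / b" if "0 \<le> x" "x < L"
proof -
  have "(\<lambda>s. y s - s powr b * w x powr p / b) 0 \<le> (\<lambda>s. y s - s powr b * w x powr p / b) x"
  proof (rule incr_from_deriv[where f="\<lambda>s. y s - s powr b * w x powr p / b"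
        and f'="\<lambda>s. s powr (b-1) * (t * w s powr p + (1-t)) - s powr (b-1) * w x powr p"])
    show "continuous_on {0..x} (\<lambda>s. y s - s powr b * w x powr p / b)"
      using that bpos by (intro continuous_intros cont_pow continuous_on_subset[OF sh_yc]) auto
    show "((\<lambda>s. y s - s powr b * w x powr p / b) has_real_derivative s powr (b-1) * (t * w s powr p + (1-t)) - s powr (b-1) * w x powr p) (at s)"
      if "0 < s" "s < x" for s
      using sh_yd[of s] that \<open>x < L\<close> bpos
      by (auto intro!: derivative_eq_intros simp: field_simps)
    show "0 \<le> s powr (b-1) * (t * w s powr p + (1-t)) - s powr (b-1) * w x powr p" if "0 < s" "s < x" for s
    proof -
      have "w x powr p \<le> w s powr p" using w_anti[of s x] sh_wb[of x] that \<open>x < L\<close> ppos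
        by (intro powr_mono2) auto
      also have "\<dots> \<le> t * w s powr p + (1-t)" using f_ge[of s] that \<open>x < L\<close> by auto
      finally show ?thesis by (simp add: mult_left_mono right_diff_distrib[symmetric])
    qed
  qed (use that in auto)
  then show ?thesis using sh_y0 bpos by simp
qed

lemma y_lower_t: "y x \<ge> (1-t) * x powr b / b" if "0 \<le> x" "x < L"
proof -
  have "(\<lambda>s. y s - (1-t) * s powr b / b) 0 \<le> (\<lambda>s. y s - (1-t) * s powr b / b) x"
  proof (rule incr_from_deriv[where f="\<lambda>s. y s - (1-t) * s powr b / b"
        and f'="\<lambda>s. s powr (b-1) * (t * w s powr p + (1-t)) - (1-t) * s powr (b-1)"])
    show "continuous_on {0..x} (\<lambda>s. y s - (1-t) * s powr b / b)"
      using that bpos by (intro continuous_intros cont_pow continuous_on_subset[OF sh_yc]) auto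
    show "((\<lambda>s. y s - (1-t) * s powr b / b) has_real_derivative s powr (b-1) * (t * w s powr p + (1-t)) - (1-t) * s powr (b-1)) (at s)"
      if "0 < s" "s < x" for s
      using sh_yd[of s] that \<open>x < L\<close> bpos
      by (auto intro!: derivative_eq_intros simp: field_simps)
    show "0 \<le> s powr (b-1) * (t * w s powr p + (1-t)) - (1-t) * s powr (b-1)" if "0 < s" "s < x" for s
    proof -
      have "s powr (b-1) * (1-t) \<le> s powr (b-1) * (t * w s powr p + (1-t))"
        using f_ge(2)[of s] that \<open>x < L\<close> by (intro mult_left_mono) auto
      then show ?thesis by (simp add: mult.commute)
    qed
  qed (use that in auto)
  then show ?thesis using sh_y0 bpos by simp
qed

lemma y_nonneg: "0 \<le> y x" if "0 \<le> x" "x < L"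
proof -
  have "0 \<le> (1-t) * x powr b / b" using sh_t bpos by auto
  then show ?thesis using y_lower_t[OF that] by linarith
qed

lemma y_pos: "0 < y x" if "0 < x" "x < L"
proof -
  have "0 < x powr b * w x powr p / b" using sh_wb[of x] that bpos by auto
  then show ?thesis using y_lower_w[of x] that by linarith
qed

lemma y_mono: "y x \<le> y x'" if "0 \<le> x" "x \<le> x'" "x' < L"
proof (rule incr_from_deriv[where f=y and f'="\<lambda>s. s powr (b-1) * (t * w s powr p + (1-t))"])
  show "continuous_on {x..x'} y" using that by (intro continuous_on_subset[OF sh_yc]) auto
  show "(y has_real_derivative s powr (b-1) * (t * w s powr p + (1-t))) (at s)" if "x < s" "s < x'" for s
    using sh_yd[of s] that \<open>0 \<le> x\<close> \<open>x' < L\<close> by auto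
  show "0 \<le> s powr (b-1) * (t * w s powr p + (1-t))" if "x < s" "s < x'" for s
    using f_ge(2)[of s] sh_t that \<open>0 \<le> x\<close> \<open>x' < L\<close> by (intro mult_nonneg_nonneg) auto
qed (use that in auto)

lemma u_upper: "u x \<le> Cu * x powr th" if "0 < x" "x < L"
proof -
  have "u x = (D x * y x * x powr (1-n)) powr q1" using sh_u[OF that] by (simp add: q1_def)
  also have "\<dots> \<le> ((Dhi/b) * x powr b * x powr (1-n)) powr q1"
  proof (intro powr_mono2)
    show "0 \<le> D x * y x * x powr (1-n)" using sh_D[OF that] Dlo y_nonneg[of x] that by auto
    have "D x * y x \<le> Dhi * (x powr b / b)"
      using sh_D[OF that] Dlo y_nonneg[of x] y_upper[of x] that by (intro mult_mono) auto
    then show "D x * y x * x powr (1-n) \<le> (Dhi/b) * x powr b * x powr (1-n)"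
      by (intro mult_right_mono) auto
  qed (use q1_pos in auto)
  also have "\<dots> = Cu * x powr th" using that Dlo bpos by (subst pow_rewrite) (auto simp: Cu_def)
  finally show ?thesis .
qed

lemma u_lower_w: "u x \<ge> cw * x powr th * w x powr sg" if "0 < x" "x < L"
proof -
  have e1: "((Dlo/b * w x powr p) * x powr b * x powr (1-n)) powr q1 = (Dlo/b * w x powr p) powr q1 * x powr th"
    using that Dlo bpos by (intro pow_rewrite) auto
  have e2: "(Dlo/b * w x powr p) powr q1 = cw * w x powr sg"
    unfolding cw_def sg_eq by (rule trans[OF powr_mult]) (simp add: powr_powr)
  have "cw * x powr th * w x powr sg = ((Dlo/b * w x powr p) * x powr b * x powr (1-n)) powr q1"
    unfolding e1 e2 by simp
  also have "\<dots> \<le> (D x * y x * x powr (1-n)) powr q1"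
  proof (intro powr_mono2)
    have "Dlo * (x powr b * w x powr p / b) \<le> D x * y x"
      using sh_D[OF that] Dlo y_lower_w[of x] that bpos by (intro mult_mono) auto
    then show "(Dlo/b * w x powr p) * x powr b * x powr (1-n) \<le> D x * y x * x powr (1-n)"
      by (intro mult_right_mono) (auto simp: field_simps)
  qed (use q1_pos Dlo bpos in auto)
  also have "\<dots> = u x" using sh_u[OF that] by (simp add: q1_def)
  finally show ?thesis .
qed

lemma u_lower_t: "u x \<ge> ((1-t)*Dlo/b) powr q1 * x powr th" if "0 < x" "x < L"
proof -
  have "((1-t)*Dlo/b) powr q1 * x powr th = (((1-t)*Dlo/b) * x powr b * x powr (1-n)) powr q1"
    using that Dlo bpos sh_t by (subst pow_rewrite) auto
  also have "\<dots> \<le> (D x * y x * x powr (1-n)) powr q1"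
  proof (intro powr_mono2)
    have "Dlo * ((1-t) * x powr b / b) \<le> D x * y x"
      using sh_D[OF that] Dlo y_lower_t[of x] that sh_t bpos by (intro mult_mono) auto
    then show "((1-t)*Dlo/b) * x powr b * x powr (1-n) \<le> D x * y x * x powr (1-n)"
      by (intro mult_right_mono) (auto simp: field_simps)
  qed (use q1_pos Dlo bpos sh_t in auto)
  also have "\<dots> = u x" using sh_u[OF that] by (simp add: q1_def)
  finally show ?thesis .
qed

lemma w_lower: "w x \<ge> 1 - Cu * x powr (th+1) / (th+1)" if "0 \<le> x" "x < L"
proof -
  have "(\<lambda>s. w s + Cu * s powr (th+1) / (th+1)) 0 \<le> (\<lambda>s. w s + Cu * s powr (th+1) / (th+1)) x"
  proof (rule incr_from_deriv[where f="\<lambda>s. w s + Cu * s powr (th+1) / (th+1)"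
        and f'="\<lambda>s. - u s + Cu * s powr th"])
    show "continuous_on {0..x} (\<lambda>s. w s + Cu * s powr (th+1) / (th+1))"
      using that th_pos by (intro continuous_intros cont_pow continuous_on_subset[OF sh_wc]) auto
    show "((\<lambda>s. w s + Cu * s powr (th+1) / (th+1)) has_real_derivative - u s + Cu * s powr th) (at s)"
      if "0 < s" "s < x" for s
      using DERIV_add[OF sh_wd[of s] deriv_pow_div[of s "th+1" Cu]] that \<open>x < L\<close> th_pos by simp
    show "0 \<le> - u s + Cu * s powr th" if "0 < s" "s < x" for s
      using u_upper[of s] that \<open>x < L\<close> by auto
  qed (use that in auto)
  then show ?thesis using sh_w0 th_pos by simp
qed

lemma w_upper_t: "w x \<le> 1 - ((1-t)*Dlo/b) powr q1 * x powr (th+1) / (th+1)" if "0 \<le> x" "x < L"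
proof -
  define c where "c = ((1-t)*Dlo/b) powr q1"
  have "(\<lambda>s. - w s - c * s powr (th+1) / (th+1)) 0 \<le> (\<lambda>s. - w s - c * s powr (th+1) / (th+1)) x"
  proof (rule incr_from_deriv[where f="\<lambda>s. - w s - c * s powr (th+1) / (th+1)"
        and f'="\<lambda>s. u s - c * s powr th"])
    show "continuous_on {0..x} (\<lambda>s. - w s - c * s powr (th+1) / (th+1))"
      using that th_pos by (intro continuous_intros cont_pow continuous_on_subset[OF sh_wc]) auto
    show "((\<lambda>s. - w s - c * s powr (th+1) / (th+1)) has_real_derivative u s - c * s powr th) (at s)"
      if "0 < s" "s < x" for s
      using DERIV_diff[OF DERIV_minus[OF sh_wd[of s]] deriv_pow_div[of s "th+1" c]] that \<open>x < L\<close> th_pos by simp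
    show "0 \<le> u s - c * s powr th" if "0 < s" "s < x" for s
      using u_lower_t[of s] that \<open>x < L\<close> by (auto simp: c_def)
  qed (use that in auto)
  then show ?thesis using sh_w0 th_pos by (simp add: c_def)
qed

lemma w_decay0: "w x powr (1-sg) \<ge> 1 + (sg-1) * cw * x powr (th+1) / (th+1)" if "0 \<le> x" "x < L"
proof -
  define f where "f = (\<lambda>s. w s powr (1-sg) - (sg-1) * cw * s powr (th+1) / (th+1))"
  have "f 0 \<le> f x"
  proof (rule incr_from_deriv[where f=f and f'="\<lambda>s. (1-sg) * w s powr (1-sg-1) * (- u s) - (sg-1) * cw * s powr th"])
    show "continuous_on {0..x} f"
      unfolding f_def using that th_pos sh_wb
      by (intro continuous_intros cont_pow continuous_on_subset[OF sh_wc]) (auto, smt (verit))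
    show "(f has_real_derivative (1-sg) * w s powr (1-sg-1) * (- u s) - (sg-1) * cw * s powr th) (at s)"
      if "0 < s" "s < x" for s
    proof -
      have d1: "((\<lambda>s. w s powr (1-sg)) has_real_derivative (1-sg) * w s powr (1-sg - of_nat 1) * (- u s)) (at s)"
        using sh_wd[of s] sh_wb[of s] that \<open>x < L\<close> by (intro DERIV_fun_powr) auto
      have d2: "((\<lambda>s. (sg-1) * cw * s powr (th+1) / (th+1)) has_real_derivative (sg-1) * cw * s powr th) (at s)"
        using deriv_pow_div[of s "th+1" "(sg-1) * cw"] that th_pos by simp
      show ?thesis unfolding f_def using DERIV_diff[OF d1 d2] by simp
    qed
    show "0 \<le> (1-sg) * w s powr (1-sg-1) * (- u s) - (sg-1) * cw * s powr th" if "0 < s" "s < x" for s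
    proof -
      have ws: "0 < w s" using sh_wb[of s] that \<open>x < L\<close> by auto
      have "cw * s powr th = w s powr (-sg) * (cw * s powr th * w s powr sg)"
        using ws by (simp add: powr_minus field_simps)
      also have "\<dots> \<le> w s powr (-sg) * u s"
        using u_lower_w[of s] that \<open>x < L\<close> by (intro mult_left_mono) auto
      finally have "cw * s powr th \<le> w s powr (-sg) * u s" .
      then have "0 \<le> (sg-1) * (w s powr (-sg) * u s - cw * s powr th)" using sg_gt1 by auto
      then show ?thesis by (simp add: algebra_simps)
    qed
  qed (use that in auto)
  then show ?thesis using sh_w0 th_pos by (simp add: f_def)
qed

lemma w_decay: "w x \<le> Cd * x powr (-ka)" if "0 < x" "x < L"
proof -
  have ws: "0 < w x" using sh_wb[of x] that by auto
  have cwp: "0 < cw" using Dlo bpos by (simp add: cw_def)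
  define A where "A = (sg-1)*cw/(th+1)"
  have Ap: "0 < A" using cwp sg_gt1 th_pos by (simp add: A_def)
  have "A * x powr (th+1) \<le> w x powr (1-sg)"
    using w_decay0[of x] that by (simp add: A_def)
  then have "(w x powr (1-sg)) powr (-1/(sg-1)) \<le> (A * x powr (th+1)) powr (-1/(sg-1))"
    using Ap that sg_gt1 by (intro powr_mono2') auto
  also have "(w x powr (1-sg)) powr (-1/(sg-1)) = w x"
  proof -
    have "(1-sg)*(-1/(sg-1)) = 1" using sg_gt1 by (simp add: field_simps)
    then show ?thesis using ws by (simp add: powr_powr)
  qed
  also have "(A * x powr (th+1)) powr (-1/(sg-1)) = A powr (-1/(sg-1)) * x powr ((th+1)*(-1/(sg-1)))"
    by (simp only: powr_mult powr_powr)
  also have "(th+1)*(-1/(sg-1)) = -ka" by (simp add: ka_def)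
  also have "A powr (-1/(sg-1)) = Cd" by (simp add: Cd_def A_def)
  finally show ?thesis .
qed

lemma y_upper_K: "y x \<le> 1/b + Cd powr p * x powr e2 / e2 + (1-t) * x powr b / b"
  if "1 \<le> x" "x < L" "0 < e2" "b - p*ka \<le> e2"
proof -
  define f where "f = (\<lambda>s. Cd powr p * s powr e2 / e2 + (1-t) * s powr b / b - y s)"
  have "f 1 \<le> f x"
  proof (rule incr_from_deriv[where f=f and f'="\<lambda>s. Cd powr p * s powr (e2-1) + (1-t) * s powr (b-1) - s powr (b-1) * (t * w s powr p + (1-t))"])
    show "continuous_on {1..x} f"
      unfolding f_def using that bpos by (intro continuous_intros cont_pow continuous_on_subset[OF sh_yc]) auto
    show "(f has_real_derivative Cd powr p * s powr (e2-1) + (1-t) * s powr (b-1) - s powr (b-1) * (t * w s powr p + (1-t))) (at s)"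
      if "1 < s" "s < x" for s
      unfolding f_def using DERIV_diff[OF DERIV_add[OF deriv_pow_div[of s e2 "Cd powr p"] deriv_pow_div[of s b "1-t"]] sh_yd[of s]]
        that \<open>x < L\<close> \<open>0 < e2\<close> bpos by simp
    show "0 \<le> Cd powr p * s powr (e2-1) + (1-t) * s powr (b-1) - s powr (b-1) * (t * w s powr p + (1-t))"
      if "1 < s" "s < x" for s
    proof -
      have s0: "0 < s" "s < L" using that \<open>x < L\<close> by auto
      have "t * w s powr p \<le> w s powr p" using sh_t by (simp add: mult_left_le_one_le)
      also have "w s powr p \<le> (Cd * s powr (-ka)) powr p"
        using w_decay[OF s0] sh_wb[of s] s0 ppos by (intro powr_mono2) auto
      also have "\<dots> = Cd powr p * s powr (-ka*p)" by (simp add: powr_mult powr_powr)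
      finally have "s powr (b-1) * (t * w s powr p) \<le> s powr (b-1) * (Cd powr p * s powr (-ka*p))"
        by (intro mult_left_mono) auto
      also have "\<dots> = Cd powr p * s powr (b - 1 - ka*p)"
        by (simp add: powr_add[symmetric] algebra_simps)
      also have "\<dots> \<le> Cd powr p * s powr (e2 - 1)"
        using that \<open>b - p*ka \<le> e2\<close> by (intro mult_left_mono powr_mono) (auto simp: algebra_simps)
      finally show ?thesis by (simp add: algebra_simps)
    qed
  qed (use that in auto)
  then have "y x \<le> y 1 + Cd powr p * x powr e2 / e2 + (1-t) * x powr b / b - Cd powr p / e2 - (1-t) / b"
    unfolding f_def by simp
  moreover have "y 1 \<le> 1/b" using y_upper[of 1] that by simp
  moreover have "0 \<le> Cd powr p / e2" "0 \<le> (1-t) / b" using \<open>0 < e2\<close> bpos sh_t by auto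
  ultimately show ?thesis by linarith
qed

definition ut where "ut x = (D0 * y x * x powr (1-n)) powr q1"
definition ff where "ff x = t * w x powr p + (1-t)"
definition Fp where "Fp x = t * w x powr (p+1) / (p+1) + (1-t) * w x"
definition PP where "PP x = (m-1)/m * x * ut x * y x + x powr b * Fp x - (n-m)/m * w x * y x"
definition PD where "PD x = x powr (b-1) * (b * Fp x - (n-m)/m * w x * ff x) + (ut x - u x) * (x powr b * ff x - (n-m)/m * y x)"

lemma ut_deriv: "(ut has_real_derivative q1 * ut x * (x powr (b-1) * ff x / y x + (1-n)/x)) (at x)"
  if "0 < x" "x < L"
proof -
  define Z where "Z = (\<lambda>s. D0 * y s * s powr (1-n))"
  define yd where "yd = x powr (b-1) * ff x"
  have yp: "0 < y x" using y_pos[OF that] .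
  have Zp: "0 < Z x" unfolding Z_def using yp D0 that by auto
  have dy: "(y has_real_derivative yd) (at x)" using sh_yd[OF that] by (simp add: yd_def ff_def)
  have dp: "((\<lambda>s. s powr (1-n)) has_real_derivative (1-n) * x powr (1-n-1)) (at x)"
    by (rule has_real_derivative_powr) fact
  have dZ0: "(Z has_real_derivative (D0 * yd) * x powr (1-n) + ((1-n) * x powr (1-n-1)) * (D0 * y x)) (at x)"
    unfolding Z_def by (intro DERIV_mult DERIV_cmult dy dp)
  have e1: "x powr (1-n-1) = x powr (1-n) / x"
  proof -
    have "x powr ((1-n) - 1) = x powr (1-n) / x powr 1" by (rule powr_diff)
    then show ?thesis using that by simp
  qed
  have e2: "(D0 * yd) * x powr (1-n) + ((1-n) * x powr (1-n-1)) * (D0 * y x) = Z x * (yd / y x + (1-n)/x)"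
    unfolding Z_def e1 using yp that by (simp add: field_simps)
  have dZ: "(Z has_real_derivative Z x * (yd / y x + (1-n)/x)) (at x)" using dZ0 e2 by simp
  have dd: "((\<lambda>s. Z s powr q1) has_real_derivative q1 * Z x powr (q1 - of_nat 1) * (Z x * (yd / y x + (1-n)/x))) (at x)"
    by (intro DERIV_fun_powr dZ Zp)
  have eqA: "q1 * Z x powr (q1 - of_nat 1) * (Z x * (yd / y x + (1-n)/x)) = q1 * ut x * (yd / y x + (1-n)/x)"
  proof -
    have "Z x powr (q1 - 1) = Z x powr q1 / Z x" using powr_diff[of "Z x" q1 1] Zp by simp
    moreover have "Z x powr q1 = ut x" by (simp add: ut_def Z_def)
    ultimately show ?thesis using Zp by simp
  qed
  have fe: "(\<lambda>s. Z s powr q1) = ut" by (simp add: ut_def Z_def fun_eq_iff)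
  note dd2 = dd[unfolded eqA fe]
  show ?thesis using dd2 unfolding yd_def .
qed

lemma PP_deriv: "(PP has_real_derivative PD x) (at x)" if "0 < x" "x < L"
proof -
  define c where "c = (m-1)/m"
  define d where "d = (n-m)/m"
  define yd where "yd = x powr (b-1) * ff x"
  define utd where "utd = q1 * ut x * (yd / y x + (1-n)/x)"
  have yp: "0 < y x" using y_pos[OF that] .
  have wp: "0 < w x" using sh_wb[of x] that by auto
  have dy: "(y has_real_derivative yd) (at x)" using sh_yd[OF that] by (simp add: yd_def ff_def)
  have dw: "(w has_real_derivative - u x) (at x)" using sh_wd[OF that] .
  have dut: "(ut has_real_derivative utd) (at x)" using ut_deriv[OF that] by (simp add: utd_def yd_def)
  have dT1: "((\<lambda>s. c * s * ut s * y s) has_real_derivative (c * 1 * ut x + utd * (c * x)) * y x + yd * (c * x * ut x)) (at x)"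
    by (intro DERIV_mult DERIV_cmult DERIV_ident dut dy)
  have dwp: "((\<lambda>s. w s powr (p+1)) has_real_derivative (p+1) * w x powr (p+1 - of_nat 1) * (- u x)) (at x)"
    by (intro DERIV_fun_powr dw wp)
  have dFp0: "(Fp has_real_derivative t * ((p+1) * w x powr (p+1 - of_nat 1) * (- u x)) / (p+1) + (1-t) * (- u x)) (at x)"
    unfolding Fp_def[abs_def] by (intro DERIV_add DERIV_cmult DERIV_cdivide dwp dw)
  have eFp: "t * ((p+1) * w x powr (p+1 - of_nat 1) * (- u x)) / (p+1) + (1-t) * (- u x) = ff x * (- u x)"
    using ppos by (simp add: ff_def field_simps)
  have dpb: "((\<lambda>s. s powr b) has_real_derivative b * x powr (b-1)) (at x)"
    by (rule has_real_derivative_powr) fact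
  have dT2: "((\<lambda>s. s powr b * Fp s) has_real_derivative (b * x powr (b-1)) * Fp x + (ff x * (- u x)) * x powr b) (at x)"
    using dFp0 eFp by (intro DERIV_mult dpb) simp_all
  have dT3: "((\<lambda>s. d * w s * y s) has_real_derivative (d * (- u x)) * y x + yd * (d * w x)) (at x)"
    by (intro DERIV_mult DERIV_cmult dw dy)
  have dP: "(PP has_real_derivative ((c * 1 * ut x + utd * (c * x)) * y x + yd * (c * x * ut x)) +
      ((b * x powr (b-1)) * Fp x + (ff x * (- u x)) * x powr b) - ((d * (- u x)) * y x + yd * (d * w x))) (at x)"
  proof -
    have "PP = (\<lambda>s. (c * s * ut s * y s + s powr b * Fp s) - d * w s * y s)"
      by (simp add: PP_def c_def d_def fun_eq_iff)
    then show ?thesis using DERIV_diff[OF DERIV_add[OF dT1 dT2] dT3] by simp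
  qed
  have xb: "x powr b = x * x powr (b-1)" using that by (simp add: powr_mult_base)
  have q1m: "q1 * (m-1) = 1" using m1 by (simp add: q1_def)
  have H: "utd * x * y x = q1 * ut x * (x powr (b-1) * ff x * x + (1-n) * y x)"
    unfolding utd_def yd_def using yp that by (simp add: field_simps)
  have E: "((c * 1 * ut x + utd * (c * x)) * y x + (x powr (b-1) * ff x) * (c * x * ut x)) +
      ((b * x powr (b-1)) * Fp x + (ff x * (- u x)) * (x * x powr (b-1))) - ((d * (- u x)) * y x + (x powr (b-1) * ff x) * (d * w x))
     = x powr (b-1) * (b * Fp x - d * w x * ff x) + (ut x - u x) * ((x * x powr (b-1)) * ff x - d * y x)"
    by (rule PD_alg[OF H, where mi="1/m"]) (use m1 q1m in \<open>auto simp: c_def d_def\<close>)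
  have "((c * 1 * ut x + utd * (c * x)) * y x + yd * (c * x * ut x)) +
      ((b * x powr (b-1)) * Fp x + (ff x * (- u x)) * x powr b) - ((d * (- u x)) * y x + yd * (d * w x)) = PD x"
    unfolding yd_def xb E by (simp add: PD_def d_def xb)
  with dP show ?thesis by simp
qed

lemma ideal_lower: "x powr (b-1) * (b * Fp x - (n-m)/m * w x * ff x) \<ge> A0 * x powr (b-1) * w x powr (p+1)"
  if "0 \<le> x" "x < L"
proof -
  have w0: "0 < w x" "w x \<le> 1" using sh_wb[OF that] by auto
  have ww: "w x * w x powr p = w x powr (p+1)" using w0 by (simp add: powr_mult_base add.commute)
  have wle: "w x powr (p+1) \<le> w x" using w0 ppos by (intro powr_le_one_le) auto
  have wf: "w x * ff x = t * w x powr (p+1) + (1-t) * w x" unfolding ff_def using ww[symmetric]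
    by (simp add: algebra_simps)
  have e: "b * Fp x - (n-m)/m * w x * ff x = t * w x powr (p+1) * A0 + (1-t) * w x * (b - (n-m)/m)"
  proof -
    have "b * Fp x - (n-m)/m * w x * ff x = b * Fp x - (n-m)/m * (w x * ff x)" by simp
    also have "\<dots> = t * w x powr (p+1) * A0 + (1-t) * w x * (b - (n-m)/m)"
      unfolding wf Fp_def A0_def using ppos by (intro alg2) auto
    finally show ?thesis .
  qed
  have "(1-t) * w x powr (p+1) * A0 \<le> (1-t) * w x * (b - (n-m)/m)"
    using sh_t wle A0_pos A0_le w0 by (intro mult_mono) auto
  then have "A0 * w x powr (p+1) \<le> b * Fp x - (n-m)/m * w x * ff x"
    unfolding e by (simp add: algebra_simps)
  then have "x powr (b-1) * (A0 * w x powr (p+1)) \<le> x powr (b-1) * (b * Fp x - (n-m)/m * w x * ff x)"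
    by (intro mult_left_mono) auto
  then show ?thesis by (simp add: algebra_simps)
qed

lemma PD_lower: "PD x \<ge> A0 * x powr (b-1) * w x powr (p+1) - \<epsilon> * EK K"
  if "0 < x" "x < L" "x \<le> K" "\<bar>(D x / D0) powr q1 - 1\<bar> \<le> \<epsilon>"
proof -
  have yp: "0 \<le> y x" "y x \<le> x powr b / b" using y_nonneg[of x] y_upper[of x] that by auto
  have Dx: "0 < D x" using sh_D[of x] that Dlo by auto
  have uu: "u x = (D x / D0) powr q1 * ut x"
  proof -
    have "u x = (D x * y x * x powr (1-n)) powr q1" using sh_u[of x] that by (simp add: q1_def)
    also have "D x * y x * x powr (1-n) = (D x / D0) * (D0 * y x * x powr (1-n))" using D0 by simp
    also have "((D x / D0) * (D0 * y x * x powr (1-n))) powr q1 = (D x / D0) powr q1 * ut x"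
      unfolding ut_def by (rule powr_mult)
    finally show ?thesis .
  qed
  have ut0: "0 \<le> ut x" by (simp add: ut_def)
  have utb: "ut x \<le> (D0/b) powr q1 * K powr th"
  proof -
    have "ut x \<le> ((D0/b) * x powr b * x powr (1-n)) powr q1"
    proof -
      have "D0 * y x \<le> D0 * (x powr b / b)" using yp D0 by (intro mult_left_mono) auto
      then show ?thesis
        unfolding ut_def using yp D0 that q1_pos by (intro powr_mono2 mult_right_mono) auto
    qed
    also have "\<dots> = (D0/b) powr q1 * x powr th" using that D0 bpos by (intro pow_rewrite) auto
    also have "\<dots> \<le> (D0/b) powr q1 * K powr th" using that th_pos by (intro mult_left_mono powr_mono2) auto
    finally show ?thesis .
  qed
  have eps: "0 \<le> \<epsilon>" using that(4) by linarith
  have d0: "0 < (n-m)/m" using nm m1 by auto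
  have ff01: "0 \<le> ff x" "ff x \<le> 1" using f_le1[of x] f_ge(2)[of x] sh_t that by (auto simp: ff_def)
  have xbK: "x powr b \<le> K powr b" using that bpos by (intro powr_mono2) auto
  have Qb: "\<bar>x powr b * ff x - (n-m)/m * y x\<bar> \<le> K powr b * (1 + (n-m)/(m*b))"
  proof -
    have a1: "x powr b * ff x \<le> x powr b" using ff01 by (simp add: mult_left_le)
    have a2: "(n-m)/m * y x \<le> (n-m)/m * (x powr b / b)" using yp d0 by (intro mult_left_mono) auto
    have a3: "0 \<le> x powr b * ff x" using ff01 by auto
    have a4: "0 \<le> (n-m)/m * y x" using yp d0 by (intro mult_nonneg_nonneg) auto
    have "\<bar>x powr b * ff x - (n-m)/m * y x\<bar> \<le> x powr b + (n-m)/m * (x powr b / b)"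
      using a1 a2 a3 a4 by linarith
    also have "\<dots> = x powr b * (1 + (n-m)/(m*b))" by (simp add: field_simps)
    also have "\<dots> \<le> K powr b * (1 + (n-m)/(m*b))"
    proof -
      have "0 < (n-m)/(m*b)" using nm m1 bpos by (intro divide_pos_pos mult_pos_pos) auto
      then show ?thesis using xbK by (intro mult_right_mono) auto
    qed
    finally show ?thesis .
  qed
  have "\<bar>ut x - u x\<bar> = \<bar>ut x * (1 - (D x / D0) powr q1)\<bar>" unfolding uu
    by (simp add: algebra_simps)
  also have "\<dots> = ut x * \<bar>(D x / D0) powr q1 - 1\<bar>" using ut0
    by (simp add: abs_mult abs_minus_commute)
  also have "\<dots> \<le> ((D0/b) powr q1 * K powr th) * \<epsilon>" using ut0 utb that(4) by (intro mult_mono) auto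
  finally have ub: "\<bar>ut x - u x\<bar> \<le> ((D0/b) powr q1 * K powr th) * \<epsilon>" .
  have "\<bar>(ut x - u x) * (x powr b * ff x - (n-m)/m * y x)\<bar> \<le> (((D0/b) powr q1 * K powr th) * \<epsilon>) * (K powr b * (1 + (n-m)/(m*b)))"
    unfolding abs_mult using ub Qb by (intro mult_mono) auto
  also have "\<dots> = \<epsilon> * EK K" by (simp add: EK_def)
  finally have err: "(ut x - u x) * (x powr b * ff x - (n-m)/m * y x) \<ge> - (\<epsilon> * EK K)"
    using abs_le_D2 by fastforce
  show ?thesis using ideal_lower[of x] that err unfolding PD_def by linarith
qed

lemma w_half: "w x \<ge> 1/2" if "0 \<le> x" "x \<le> x1" "x < L" "Cu * x1 powr (th+1) / (th+1) \<le> 1/2"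
proof -
  have "x powr (th+1) \<le> x1 powr (th+1)" using that th_pos by (intro powr_mono2) auto
  moreover have "0 \<le> Cu" by (simp add: Cu_def)
  ultimately have "Cu * x powr (th+1) / (th+1) \<le> Cu * x1 powr (th+1) / (th+1)"
    using th_pos by (intro divide_right_mono mult_left_mono) auto
  then show ?thesis using w_lower[of x] that by linarith
qed

lemma w_eta:
  assumes "0 < x1" "x1 \<le> K" "2*K < L" "Cu * x1 powr (th+1) / (th+1) \<le> 1/2"
    and "0 < \<eta>" "\<eta> \<le> 1/2" "\<eta> \<le> (Dlo * (x1 powr b * (1/2) powr p / b) * (2*K) powr (1-n)) powr q1 * K / 2"
    and "0 \<le> x" "x \<le> K"
  shows "\<eta> \<le> w x"
proof (rule ccontr)
  assume "\<not> \<eta> \<le> w x"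
  then have wx: "w x < \<eta>" by simp
  define c where "c = (Dlo * (x1 powr b * (1/2) powr p / b) * (2*K) powr (1-n)) powr q1"
  have x1x: "x1 < x" using w_half[of x x1] assms wx by force
  have cpos: "0 < c" unfolding c_def using assms Dlo bpos by auto
  define x2 where "x2 = x + 2*\<eta>/c"
  have "2*\<eta>/c \<le> K" using assms(7) cpos by (simp add: c_def field_simps)
  then have x2le: "x2 \<le> 2*K" "x < x2" using assms cpos by (auto simp: x2_def)
  have "(\<lambda>s. - w s - c * s) x \<le> (\<lambda>s. - w s - c * s) x2"
  proof (rule incr_from_deriv[where f="\<lambda>s. - w s - c * s" and f'="\<lambda>s. u s - c"])
    show "continuous_on {x..x2} (\<lambda>s. - w s - c * s)"
      using x2le assms by (intro continuous_intros continuous_on_subset[OF sh_wc]) auto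
    show "((\<lambda>s. - w s - c * s) has_real_derivative u s - c) (at s)" if "x < s" "s < x2" for s
      using DERIV_diff[OF DERIV_minus[OF sh_wd[of s]] DERIV_cmult[OF DERIV_ident, of c]] that x1x assms x2le
      by simp
    show "0 \<le> u s - c" if "x < s" "s < x2" for s
    proof -
      have s0: "0 < s" "s < L" using that x1x assms x2le by auto
      have "y x1 \<ge> x1 powr b * w x1 powr p / b" using y_lower_w[of x1] assms by auto
      moreover have "w x1 powr p \<ge> (1/2) powr p" using w_half[of x1 x1] assms ppos by (intro powr_mono2) auto
      ultimately have "y x1 \<ge> x1 powr b * (1/2) powr p / b" using bpos
        by (smt (verit) divide_right_mono mult_left_mono powr_ge_zero)
      moreover have "y x1 \<le> y s" using y_mono[of x1 s] that x1x s0 assms by auto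
      ultimately have ys: "x1 powr b * (1/2) powr p / b \<le> y s" by linarith
      have ps: "(2*K) powr (1-n) \<le> s powr (1-n)" using that x2le s0 nm m1 by (intro powr_mono2') auto
      have ysn: "0 \<le> y s" using y_nonneg[of s] s0 by auto
      have "0 \<le> x1 powr b * (1/2) powr p / b" using bpos by auto
      then have "Dlo * (x1 powr b * (1/2) powr p / b) * (2*K) powr (1-n) \<le> D s * y s * s powr (1-n)"
        using sh_D[OF s0] Dlo ys ps ysn by (intro mult_mono) auto
      then have "c \<le> u s" unfolding c_def sh_u[OF s0] q1_def[symmetric] using q1_pos Dlo bpos
        by (intro powr_mono2) auto
      then show ?thesis by simp
    qed
  qed (use x2le in auto)
  then have "w x2 \<le> w x - c * (x2 - x)" by (simp add: algebra_simps)
  also have "c * (x2 - x) = 2*\<eta>" using cpos by (simp add: x2_def)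
  finally have "w x2 < 0" using wx assms(5) by linarith
  moreover have "0 < w x2" using sh_wb[of x2] x2le assms by auto
  ultimately show False by simp
qed

lemma tau_case:
  assumes "0 < \<tau>" "\<tau> < 1 - t" "(2*(th+1)/((\<tau>*Dlo/b) powr q1)) powr (1/(th+1)) < L"
  shows False
proof -
  define c where "c = (\<tau>*Dlo/b) powr q1"
  define K where "K = (2*(th+1)/c) powr (1/(th+1))"
  have cpos: "0 < c" using assms Dlo bpos by (simp add: c_def)
  have Kpos: "0 < K" using cpos th_pos by (simp add: K_def)
  have KL: "K < L" using assms by (simp add: K_def c_def)
  have "K powr (th+1) = 2*(th+1)/c" unfolding K_def using cpos th_pos by (simp add: powr_powr)
  have "c \<le> ((1-t)*Dlo/b) powr q1" unfolding c_def using assms Dlo bpos q1_pos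
    by (intro powr_mono2 divide_right_mono mult_right_mono) auto
  then have "c * K powr (th+1) / (th+1) \<le> ((1-t)*Dlo/b) powr q1 * K powr (th+1) / (th+1)"
    using th_pos by (intro divide_right_mono mult_right_mono) auto
  moreover have "c * K powr (th+1) / (th+1) = 2"
    using \<open>K powr (th+1) = 2*(th+1)/c\<close> cpos th_pos by (simp add: field_simps)
  ultimately have "w K \<le> -1" using w_upper_t[of K] Kpos KL by linarith
  then show False using sh_wb[of K] Kpos KL by auto
qed

lemma PP_cont: "continuous_on {a..c} PP" if "0 < a" "c < L"
proof (intro continuous_at_imp_continuous_on ballI)
  fix x assume "x \<in> {a..c}"
  then show "isCont PP x" using DERIV_isCont[OF PP_deriv[of x]] that by auto
qed

lemma Fp_nonneg: "0 \<le> Fp x" if "0 \<le> x" "x < L"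
  using sh_wb[OF that] sh_t ppos unfolding Fp_def by (intro add_nonneg_nonneg mult_nonneg_nonneg divide_nonneg_pos) auto

lemma poho_lower:
  assumes "0 < s0" "s0 \<le> x1" "x1 \<le> K" "K < L" "Cu * x1 powr (th+1)/(th+1) \<le> 1/2" "0 \<le> \<epsilon>"
    and close: "\<And>x. s0 \<le> x \<Longrightarrow> x \<le> K \<Longrightarrow> \<bar>(D x/D0) powr q1 - 1\<bar> \<le> \<epsilon>"
  shows "PP K \<ge> A0 * (1/2) powr (p+1) * (x1 powr b - s0 powr b)/b - (n-m)/m * (s0 powr b / b) - \<epsilon> * EK K * K"
proof -
  define \<mu> where "\<mu> = A0 * (1/2) powr (p+1)"
  define E where "E = \<epsilon> * EK K"
  have E0: "0 \<le> E" using assms(6) D0 bpos th_pos unfolding E_def EK_def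
    by (intro mult_nonneg_nonneg add_nonneg_nonneg divide_nonneg_pos) (use nm m1 in auto)
  have st1: "(\<lambda>x. PP x - \<mu> * x powr b / b + E * x) s0 \<le> (\<lambda>x. PP x - \<mu> * x powr b / b + E * x) x1"
  proof (rule incr_from_deriv[where f="\<lambda>x. PP x - \<mu> * x powr b / b + E * x" and f'="\<lambda>x. PD x - \<mu> * x powr (b-1) + E"])
    show "continuous_on {s0..x1} (\<lambda>x. PP x - \<mu> * x powr b / b + E * x)"
      using assms bpos by (intro continuous_intros PP_cont cont_pow) auto
    show "((\<lambda>x. PP x - \<mu> * x powr b / b + E * x) has_real_derivative PD x - \<mu> * x powr (b-1) + E) (at x)"
      if "s0 < x" "x < x1" for x
      using DERIV_add[OF DERIV_diff[OF PP_deriv[of x] deriv_pow_div[of x b \<mu>]] DERIV_cmult[OF DERIV_ident, of E]]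
        that assms bpos by simp
    show "0 \<le> PD x - \<mu> * x powr (b-1) + E" if "s0 < x" "x < x1" for x
    proof -
      have "PD x \<ge> A0 * x powr (b-1) * w x powr (p+1) - E"
        unfolding E_def using that assms by (intro PD_lower close) auto
      moreover have "w x powr (p+1) \<ge> (1/2) powr (p+1)"
        using w_half[of x x1] that assms ppos by (intro powr_mono2) auto
      then have "A0 * x powr (b-1) * w x powr (p+1) \<ge> A0 * x powr (b-1) * (1/2) powr (p+1)"
        using A0_pos by (intro mult_left_mono) auto
      ultimately show ?thesis unfolding \<mu>_def by (simp add: algebra_simps)
    qed
  qed (use assms in auto)
  have st2: "(\<lambda>x. PP x + E * x) x1 \<le> (\<lambda>x. PP x + E * x) K"
  proof (rule incr_from_deriv[where f="\<lambda>x. PP x + E * x" and f'="\<lambda>x. PD x + E"])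
    show "continuous_on {x1..K} (\<lambda>x. PP x + E * x)"
      using assms by (intro continuous_intros PP_cont) auto
    show "((\<lambda>x. PP x + E * x) has_real_derivative PD x + E) (at x)" if "x1 < x" "x < K" for x
      using DERIV_add[OF PP_deriv[of x] DERIV_cmult[OF DERIV_ident, of E]] that assms by simp
    show "0 \<le> PD x + E" if "x1 < x" "x < K" for x
    proof -
      have "PD x \<ge> A0 * x powr (b-1) * w x powr (p+1) - E"
        unfolding E_def using that assms by (intro PD_lower close) auto
      moreover have "0 \<le> A0 * x powr (b-1) * w x powr (p+1)" using A0_pos by auto
      ultimately show ?thesis by linarith
    qed
  qed (use assms in auto)
  have Ps0: "PP s0 \<ge> - ((n-m)/m * (s0 powr b / b))"
  proof -
    have a: "0 \<le> (m-1)/m * s0 * ut s0 * y s0" using m1 assms y_nonneg[of s0]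
      by (intro mult_nonneg_nonneg) (auto simp: ut_def)
    have b: "0 \<le> s0 powr b * Fp s0" using Fp_nonneg[of s0] assms by auto
    have "w s0 * y s0 \<le> 1 * (s0 powr b / b)" using sh_wb[of s0] y_nonneg[of s0] y_upper[of s0] assms
      by (intro mult_mono) auto
    then have "(n-m)/m * (w s0 * y s0) \<le> (n-m)/m * (s0 powr b / b)" using nm m1 by (intro mult_left_mono) auto
    then show ?thesis using a b unfolding PP_def by (simp add: algebra_simps)
  qed
  have "0 \<le> E * s0" using E0 assms by auto
  moreover have "\<mu> * (x1 powr b - s0 powr b) / b = \<mu> * x1 powr b / b - \<mu> * s0 powr b / b"
    by (simp add: right_diff_distrib diff_divide_distrib)
  ultimately show ?thesis using st1 st2 Ps0 unfolding \<mu>_def[symmetric] E_def[symmetric] by linarith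
qed

lemma poho_upper:
  assumes "1 \<le> K" "K < L" "1 - t \<le> \<tau>" "\<tau> * K powr b \<le> 1" "0 < e2" "b - p*ka \<le> e2"
  shows "PP K \<le> (m-1)/m * K * (D0 * (2*(1/b + Cd powr p / e2)*K powr e2) * K powr (1-n)) powr q1 * (2*(1/b + Cd powr p / e2)*K powr e2)
     + K powr b * (Cd powr (p+1) * K powr (-ka*(p+1))) / (p+1) + \<tau> * K powr b"
proof -
  define Y where "Y = 2*(1/b + Cd powr p / e2)*K powr e2"
  have K0: "0 < K" "K < L" using assms by auto
  have Ke: "1 \<le> K powr e2" using assms by (intro ge_one_powr_ge_zero) auto
  have Cdp: "0 \<le> Cd powr p / e2" using assms by auto
  have yK: "y K \<le> Y"
  proof -
    have "(1-t) * K powr b / b \<le> \<tau> * K powr b / b" using assms bpos by (intro divide_right_mono mult_right_mono) auto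
    also have "\<dots> \<le> 1/b" using assms bpos by (intro divide_right_mono) auto
    finally have a: "(1-t) * K powr b / b \<le> 1/b" .
    have "Cd powr p * K powr e2 / e2 = (Cd powr p / e2) * K powr e2" by simp
    moreover have "(1/b) * 1 \<le> (1/b) * K powr e2" using Ke bpos by (intro mult_left_mono) auto
    moreover have "(Cd powr p / e2) * 1 \<le> (Cd powr p / e2) * K powr e2" using Ke Cdp by (intro mult_left_mono) auto
    moreover have "Y = 2*((1/b) * K powr e2) + 2*((Cd powr p / e2) * K powr e2)" unfolding Y_def by (simp add: algebra_simps)
    moreover have "0 \<le> (Cd powr p / e2) * K powr e2" using Cdp by (intro mult_nonneg_nonneg) auto
    ultimately have "1/b + Cd powr p * K powr e2 / e2 + 1/b \<le> Y" by linarith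
    then show ?thesis using y_upper_K[of K e2] assms a by linarith
  qed
  have y0: "0 \<le> y K" using y_nonneg[of K] K0 by auto
  have utK: "ut K \<le> (D0 * Y * K powr (1-n)) powr q1"
    unfolding ut_def using yK y0 D0 q1_pos by (intro powr_mono2 mult_right_mono mult_left_mono) auto
  have T1: "(m-1)/m * K * ut K * y K \<le> (m-1)/m * K * (D0 * Y * K powr (1-n)) powr q1 * Y"
    using utK yK y0 m1 K0 by (intro mult_mono mult_nonneg_nonneg) (auto simp: ut_def)
  have w01: "0 < w K" "w K \<le> 1" using sh_wb[of K] K0 by auto
  have wp: "w K powr (p+1) \<le> Cd powr (p+1) * K powr (-ka*(p+1))"
  proof -
    have "w K powr (p+1) \<le> (Cd * K powr (-ka)) powr (p+1)" using w_decay[OF K0] w01 ppos by (intro powr_mono2) auto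
    then show ?thesis by (simp add: powr_mult powr_powr)
  qed
  have Fp: "Fp K \<le> Cd powr (p+1) * K powr (-ka*(p+1)) / (p+1) + \<tau>"
  proof -
    have "t * w K powr (p+1) / (p+1) \<le> w K powr (p+1) / (p+1)" using sh_t ppos
      by (intro divide_right_mono) (auto simp: mult_left_le_one_le)
    moreover have "(1-t) * w K \<le> \<tau>" using assms w01 sh_t
      by (smt (verit) mult_left_le mult_right_mono)
    moreover have "w K powr (p+1) / (p+1) \<le> Cd powr (p+1) * K powr (-ka*(p+1)) / (p+1)"
      using wp ppos by (intro divide_right_mono) auto
    ultimately show ?thesis unfolding Fp_def by linarith
  qed
  have T2: "K powr b * Fp K \<le> K powr b * (Cd powr (p+1) * K powr (-ka*(p+1))) / (p+1) + \<tau> * K powr b"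
    using mult_left_mono[OF Fp, of "K powr b"] by (simp add: algebra_simps)
  have T3: "0 \<le> (n-m)/m * w K * y K" using w01 y0 nm m1 by auto
  show ?thesis using T1 T2 T3 unfolding PP_def Y_def[symmetric] by linarith
qed

end

lemma ka_eq2: "ka * (p-m+1) = b-n+m"
proof -
  have "sg - 1 = (p-m+1)/(m-1)" using m1 by (simp add: sg_def field_simps)
  moreover have "th + 1 = (b-n+m)/(m-1)" using m1 by (simp add: th_def field_simps)
  ultimately have "ka = ((b-n+m)/(m-1)) / ((p-m+1)/(m-1))" by (simp add: ka_def)
  also have "\<dots> = (b-n+m)/(p-m+1)" using m1 by simp
  finally show ?thesis using m1 pm by simp
qed

lemma ka_gt: "(n-m)/m < ka"
proof -
  have "(n-m)*(p+1) < m*b" using crit by (simp add: algebra_simps)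
  then have "(n-m)*(p-m+1) < m*(b-n+m)" by (simp add: algebra_simps)
  also have "\<dots> = m * (ka * (p-m+1))" using ka_eq2 by simp
  finally have "(n-m) * (p-m+1) < (m * ka) * (p-m+1)" by (simp add: algebra_simps)
  then have "n - m < m * ka" using pm by (simp add: mult_less_cancel_right)
  then show ?thesis using m1 by (simp add: field_simps)
qed

lemma e_lt: "b - p*ka < (n-m)/m"
proof -
  have e: "b - p*ka = n - m - (m-1)*ka" using ka_eq2 by (simp add: algebra_simps)
  have "(n-m)/m * (m-1) < ka * (m-1)" using ka_gt m1 by (intro mult_strict_right_mono) auto
  then have "n - m - (m-1)*ka < n - m - (n-m)/m*(m-1)" by (simp add: algebra_simps)
  also have "\<dots> = (n-m)/m" using m1 by (simp add: field_simps)
  finally show ?thesis using e by simp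
qed

lemma z2_pos: "0 < ka*(p+1) - b"
proof -
  have "ka*(p+1) - b = m*ka - (n-m)" using ka_eq2 by (simp add: algebra_simps)
  moreover have "n - m < m*ka" using ka_gt m1 by (simp add: field_simps)
  ultimately show ?thesis by simp
qed

lemma T1_eq:
  fixes K Cy e2 :: real
  assumes "0 < K"
  shows "(m-1)/m * K * (D0 * (2*Cy*K powr e2) * K powr (1-n)) powr q1 * (2*Cy*K powr e2)
    = ((m-1)/m * (D0*2*Cy) powr q1 * (2*Cy)) * K powr (-((n - m - m*e2)/(m-1)))"
proof -
  have a: "D0 * (2*Cy*K powr e2) * K powr (1-n) = (D0*2*Cy) * K powr (e2 + (1-n))"
    by (simp add: powr_add)
  have b: "(D0 * (2*Cy*K powr e2) * K powr (1-n)) powr q1 = (D0*2*Cy) powr q1 * K powr ((e2 + (1-n))*q1)"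
    unfolding a by (simp add: powr_mult powr_powr)
  have c: "K * K powr ((e2 + (1-n))*q1) * K powr e2 = K powr (1 + (e2 + (1-n))*q1 + e2)"
    using assms by (simp add: powr_add)
  have d: "1 + (e2 + (1-n))*q1 + e2 = -((n - m - m*e2)/(m-1))"
    using m1 by (simp add: q1_def field_simps)
  have "(m-1)/m * K * (D0 * (2*Cy*K powr e2) * K powr (1-n)) powr q1 * (2*Cy*K powr e2)
     = ((m-1)/m * (D0*2*Cy) powr q1 * (2*Cy)) * (K * K powr ((e2 + (1-n))*q1) * K powr e2)"
    unfolding b by (simp only: mult_ac)
  also have "K * K powr ((e2 + (1-n))*q1) * K powr e2 = K powr (-((n - m - m*e2)/(m-1)))"
    using c d by simp
  finally show ?thesis .
qed

lemma T2_eq: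
  fixes K :: real
  assumes "0 < K"
  shows "K powr b * (Cd powr (p+1) * K powr (-ka*(p+1))) / (p+1) = (Cd powr (p+1)/(p+1)) * K powr (-(ka*(p+1) - b))"
proof -
  have "K powr b * K powr (-ka*(p+1)) = K powr (-(ka*(p+1) - b))" by (simp add: powr_add[symmetric])
  then show ?thesis by (simp add: algebra_simps)
qed

lemma core_exists:
  "\<exists>K \<eta> \<epsilon> L0. 0 < K \<and> 0 < \<eta> \<and> 0 < \<epsilon> \<and> 0 < L0 \<and>
     (\<forall>t L w y u D. SH t L w y u D \<longrightarrow> L0 \<le> L \<longrightarrow>
        (\<forall>x. 0 < x \<and> x \<le> K \<and> \<eta> \<le> w x \<longrightarrow> \<bar>(D x / D0) powr q1 - 1\<bar> \<le> \<epsilon>) \<longrightarrow> False)"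
proof -
  have Cupos: "0 < Cu" using Dlo bpos by (simp add: Cu_def)
  define x1 where "x1 = min 1 (((th+1)/(2*Cu)) powr (1/(th+1)))"
  have x1pos: "0 < x1" "x1 \<le> 1" using Cupos th_pos by (auto simp: x1_def)
  have x1c: "Cu * x1 powr (th+1) / (th+1) \<le> 1/2"
  proof -
    have "x1 powr (th+1) \<le> (((th+1)/(2*Cu)) powr (1/(th+1))) powr (th+1)"
      using x1pos th_pos by (intro powr_mono2) (auto simp: x1_def)
    also have "\<dots> = (th+1)/(2*Cu)" using th_pos Cupos by (simp add: powr_powr)
    finally have "Cu * x1 powr (th+1) \<le> Cu * ((th+1)/(2*Cu))" using Cupos by (intro mult_left_mono) auto
    also have "\<dots> = (th+1)/2" using Cupos by simp
    finally show ?thesis using th_pos by (simp add: field_simps)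
  qed
  define \<mu> where "\<mu> = A0 * (1/2) powr (p+1)"
  have mupos: "0 < \<mu>" using A0_pos by (simp add: \<mu>_def)
  define c0 where "c0 = \<mu> * x1 powr b / (2*b)"
  have c0pos: "0 < c0" using mupos x1pos bpos by (simp add: c0_def)
  define dd where "dd = (n-m)/m"
  have ddpos: "0 < dd" using nm m1 by (simp add: dd_def)
  have elt: "b - p*ka < dd" using e_lt by (simp add: dd_def)
  define e2 where "e2 = (max (b - p*ka) 0 + dd)/2"
  have e2': "0 < e2" "b - p*ka \<le> e2" "e2 < dd" using elt ddpos
    by (cases "b - p*ka \<le> 0"; simp add: e2_def max_def)+
  have e2: "0 < e2" "b - p*ka \<le> e2" "e2 < (n-m)/m" using e2' by (auto simp: dd_def)
  define Cy where "Cy = 1/b + Cd powr p / e2"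
  define \<zeta>1 where "\<zeta>1 = (n - m - m*e2)/(m-1)"
  have z1: "0 < \<zeta>1" using e2 m1 by (simp add: \<zeta>1_def field_simps)
  define C1 where "C1 = (m-1)/m * (D0*2*Cy) powr q1 * (2*Cy)"
  have C1: "0 \<le> C1" using m1 bpos e2 by (simp add: C1_def Cy_def)
  define \<zeta>2 where "\<zeta>2 = ka*(p+1) - b"
  have z2: "0 < \<zeta>2" using z2_pos by (simp add: \<zeta>2_def)
  define C2 where "C2 = Cd powr (p+1)/(p+1)"
  have C2: "0 \<le> C2" using ppos by (simp add: C2_def)
  define K where "K = max 1 (max ((C1/(c0/4)) powr (1/\<zeta>1)) ((C2/(c0/4)) powr (1/\<zeta>2)))"
  have K1: "1 \<le> K" by (simp add: K_def)
  have Kpos: "0 < K" using K1 by simp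
  have T1b: "C1 * K powr (-\<zeta>1) \<le> c0/4"
    using C1 z1 c0pos Kpos by (intro powK_small) (auto simp: K_def)
  have T2b: "C2 * K powr (-\<zeta>2) \<le> c0/4"
    using C2 z2 c0pos Kpos by (intro powK_small) (auto simp: K_def)
  have Kb: "0 < K powr b" using Kpos by simp
  define \<tau> where "\<tau> = min (1/2) (min ((c0/4)/K powr b) (1/K powr b))"
  have taupos: "0 < \<tau>" using c0pos Kb by (simp add: \<tau>_def)
  have tau1: "\<tau> * K powr b \<le> 1" "\<tau> * K powr b \<le> c0/4"
    using Kb by (auto simp: \<tau>_def min_def field_simps)
  define K\<tau> where "K\<tau> = (2*(th+1)/((\<tau>*Dlo/b) powr q1)) powr (1/(th+1))"
  have Ktpos: "0 \<le> K\<tau>" by (simp add: K\<tau>_def)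
  define d where "d = (n-m)/m"
  have dpos: "0 < d" using nm m1 by (simp add: d_def)
  define s0 where "s0 = x1 * min 1 ((\<mu>/(4*(\<mu> + d))) powr (1/b))"
  have s0pos: "0 < s0" "s0 \<le> x1" using x1pos mupos dpos by (auto simp: s0_def mult_le_cancel_left1)
  have s0b: "(\<mu> + d) * (s0 powr b / b) \<le> c0/2"
  proof -
    have "s0 powr b \<le> (x1 * (\<mu>/(4*(\<mu> + d))) powr (1/b)) powr b"
      using s0pos x1pos mupos dpos bpos by (intro powr_mono2) (auto simp: s0_def)
    also have "\<dots> = x1 powr b * (\<mu>/(4*(\<mu> + d)))"
      using bpos mupos dpos by (simp add: powr_mult powr_powr)
    finally have "(\<mu> + d) * s0 powr b \<le> (\<mu> + d) * (x1 powr b * (\<mu>/(4*(\<mu> + d))))"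
      using mupos dpos by (intro mult_left_mono) auto
    also have "\<dots> = x1 powr b * \<mu> / 4" using mupos dpos by (simp add: field_simps)
    finally have h: "(\<mu> + d) * s0 powr b \<le> x1 powr b * \<mu> / 4" .
    have "((\<mu> + d) * s0 powr b)/b \<le> (x1 powr b * \<mu> / 4)/b" using bpos h by (intro divide_right_mono) auto
    moreover have "(\<mu>+d)*(s0 powr b / b) = ((\<mu> + d) * s0 powr b)/b" by simp
    moreover have "c0/2 = (x1 powr b * \<mu> / 4)/b" by (simp add: c0_def)
    ultimately show ?thesis by linarith
  qed
  have EKpos: "0 < EK K" unfolding EK_def using D0 bpos Kpos nm m1
    by (intro mult_pos_pos add_pos_pos divide_pos_pos) auto
  define \<epsilon> where "\<epsilon> = c0 / (2 * EK K * K)"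
  have epspos: "0 < \<epsilon>" using c0pos EKpos Kpos by (simp add: \<epsilon>_def)
  have epsb: "\<epsilon> * EK K * K = c0/2" using EKpos Kpos by (simp add: \<epsilon>_def)
  define cc where "cc = (Dlo * (x1 powr b * (1/2) powr p / b) * (2*K) powr (1-n)) powr q1"
  define \<eta> where "\<eta> = min (1/2) (cc * K / 2)"
  have ccpos: "0 < cc" unfolding cc_def using Dlo x1pos bpos Kpos by simp
  have etapos: "0 < \<eta>" using ccpos Kpos by (simp add: \<eta>_def)
  define L0 where "L0 = 2*K + K\<tau> + 1"
  have L0pos: "0 < L0" using Kpos Ktpos by (simp add: L0_def)
  have main: False if sh: "SH t L w y u D" and LL: "L0 \<le> L"
    and close: "\<forall>x. 0 < x \<and> x \<le> K \<and> \<eta> \<le> w x \<longrightarrow> \<bar>(D x / D0) powr q1 - 1\<bar> \<le> \<epsilon>" for t L w y u D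
  proof -
    have KL: "2*K < L" "K\<tau> < L" "K < L" using LL Ktpos Kpos by (auto simp: L0_def)
    have weta: "\<eta> \<le> w x" if "0 \<le> x" "x \<le> K" for x
      using w_eta[OF sh x1pos(1) _ KL(1) x1c etapos, of x] x1pos K1 that
      by (auto simp: \<eta>_def cc_def)
    show False
    proof (cases "\<tau> < 1 - t")
      case True
      then show False using tau_case[OF sh taupos True] KL(2) by (simp add: K\<tau>_def)
    next
      case False
      then have tt: "1 - t \<le> \<tau>" by simp
      have lo: "PP_low \<le> 0" if "PP_low = 0" for PP_low :: real using that by simp
      have close2: "\<bar>(D x/D0) powr q1 - 1\<bar> \<le> \<epsilon>" if "s0 \<le> x" "x \<le> K" for x
        using close weta[of x] that s0pos by auto
      note L1 = poho_lower[OF sh s0pos(1) s0pos(2) _ KL(3) x1c _ close2]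
      note U1 = poho_upper[OF sh K1 KL(3) tt tau1(1) e2(1) e2(2)]
      have L2: "A0 * (1/2) powr (p+1) * (x1 powr b - s0 powr b)/b - (n-m)/m * (s0 powr b / b) - \<epsilon> * EK K * K \<ge> c0"
      proof -
        have "A0 * (1/2) powr (p+1) * (x1 powr b - s0 powr b)/b = \<mu> * x1 powr b / b - \<mu> * (s0 powr b / b)"
          by (simp add: \<mu>_def right_diff_distrib diff_divide_distrib)
        moreover have "\<mu> * x1 powr b / b = 2 * c0" using bpos by (simp add: c0_def)
        moreover have "(\<mu> + d) * (s0 powr b / b) = \<mu> * (s0 powr b / b) + (n-m)/m * (s0 powr b / b)"
          by (simp add: d_def algebra_simps)
        ultimately show ?thesis using s0b epsb by linarith
      qed
      have U2: "(m-1)/m * K * (D0 * (2*(1/b + Cd powr p / e2)*K powr e2) * K powr (1-n)) powr q1 * (2*(1/b + Cd powr p / e2)*K powr e2)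
          + K powr b * (Cd powr (p+1) * K powr (-ka*(p+1))) / (p+1) + \<tau> * K powr b \<le> 3*c0/4"
      proof -
        have "(m-1)/m * K * (D0 * (2*(1/b + Cd powr p / e2)*K powr e2) * K powr (1-n)) powr q1 * (2*(1/b + Cd powr p / e2)*K powr e2)
           = C1 * K powr (-\<zeta>1)"
          using T1_eq[OF Kpos, of Cy e2] by (simp add: Cy_def C1_def \<zeta>1_def)
        moreover have "K powr b * (Cd powr (p+1) * K powr (-ka*(p+1))) / (p+1) = C2 * K powr (-\<zeta>2)"
          using T2_eq[OF Kpos] by (simp add: C2_def \<zeta>2_def)
        ultimately show ?thesis using T1b T2b tau1(2) by linarith
      qed
      have "x1 \<le> K" using x1pos K1 by linarith
      then show False using L1[OF \<open>x1 \<le> K\<close> less_imp_le[OF epspos]] U1 L2 U2 c0pos by linarith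
    qed
  qed
  show ?thesis
    apply (rule exI[of _ K], rule exI[of _ \<eta>], rule exI[of _ \<epsilon>], rule exI[of _ L0])
    using Kpos etapos epspos L0pos main by blast
qed

end



lemma abs_powr_mult: "\<bar>z\<bar> powr (e - 1) * \<bar>z\<bar> = \<bar>z\<bar> powr e" for z e :: real
proof (cases "z = 0")
  case False
  have "\<bar>z\<bar> powr (e-1) * \<bar>z\<bar> powr 1 = \<bar>z\<bar> powr ((e-1)+1)" by (rule powr_add[symmetric])
  moreover have "\<bar>z\<bar> powr 1 = \<bar>z\<bar>" by simp
  ultimately show ?thesis by simp
qed simp

context
  fixes N :: nat and R m p \<gamma> \<alpha> \<beta> q c1 c2 kk \<xi> :: real and g a v vd F' :: "real \<Rightarrow> real"
begin

definition Fl where "Fl r = r powr (real N + \<alpha> - 1) * (\<bar>vd r\<bar> powr (m - 2) * vd r) / (a r + gtrunc g kk (v r)) powr \<gamma>"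

definition "MM = v 0"
definition "rho = \<xi> / (hfun q p MM * MM powr p)"
definition "tt = 1/(1+rho)"
definition "lam = (MM powr (p-m+1) * (1+rho)) powr (-1/(\<beta> - \<alpha> + m))"
definition "LL = R / lam"
definition "ws x = v (lam*x) / MM"
definition "ys x = - Fl (lam*x) / (lam powr ((real N + \<alpha>) - m) * MM powr (m-1))"
definition "us x = - (lam * vd (lam*x)) / MM"
definition "Ds x = (a (lam*x) + gtrunc g kk (v (lam*x))) powr \<gamma>"


context
  assumes R0: "R > 0" and m1: "m > 1" and nam: "real N + \<alpha> - m > 0" and ba: "\<beta> - \<alpha> + 1 > 0"
    and pm: "m - 1 < p" and gam: "0 < \<gamma>" and c1: "0 < c1" "c1 \<le> c2" and abnd: "\<forall>t\<ge>0. c1 \<le> a t \<and> a t \<le> c2"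
    and ac: "continuous_on {0..} a" and gnn: "\<forall>s\<ge>0. g s \<ge> 0" and gmono: "mono_on {0..} g"
    and kk: "0 \<le> kk" and xi: "0 \<le> \<xi>"
    and vpos: "\<forall>r\<in>{0..<R}. v r > 0" and vc: "continuous_on {0..R} v"
    and vder: "\<forall>r\<in>{0..<R}. (v has_real_derivative vd r) (at r within {0..<R})"
    and vdc: "continuous_on {0..<R} vd"
    and Fder: "\<forall>r\<in>{0<..<R}. (Fl has_real_derivative F' r) (at r)"
    and Feq: "\<forall>r\<in>{0<..<R}. - F' r = r powr (real N + \<beta> - 1) * (v r powr p + \<xi> / hfun q p (supnorm R v))"
    and vd0: "vd 0 = 0" and vR: "v R = 0"
    and crit: "(p+1)*((real N + \<alpha>) - m) < m*(real N + \<beta>)"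
begin

lemma n1: "0 < real N + \<alpha> - 1" using nam m1 by linarith

lemma v_nonneg: "0 \<le> v r" if "0 \<le> r" "r \<le> R"
proof (cases "r = R")
  case False
  then have "r \<in> {0..<R}" using that by auto
  then have "0 < v r" using vpos by blast
  then show ?thesis by simp
qed (use vR in simp)

lemma gt_bounds: "0 \<le> gtrunc g kk s \<and> gtrunc g kk s \<le> g kk" if "0 \<le> s"
proof -
  have "0 \<le> min kk s" using kk that by simp
  then show ?thesis unfolding gtrunc_def using gnn gmono kk
    by (auto intro: mono_onD)
qed

lemma den_lower: "c1 powr \<gamma> \<le> (a r + gtrunc g kk (v r)) powr \<gamma>" if "0 \<le> r" "r \<le> R"
proof -
  have "c1 \<le> a r + gtrunc g kk (v r)" using abnd gt_bounds[of "v r"] v_nonneg[OF that] that by force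
  then show ?thesis using c1 gam by (intro powr_mono2) auto
qed

lemma Fl0: "Fl 0 = 0" by (simp add: Fl_def)

lemma Fl_lim: "(Fl \<longlongrightarrow> 0) (at 0 within {0..<R})"
proof (rule Lim_null_comparison)
  have ev: "eventually (\<lambda>r. r \<in> {0..<R}) (at 0 within {0..<R})" by (simp add: eventually_at_filter)
  show "eventually (\<lambda>r. norm (Fl r) \<le> r powr (real N + \<alpha> - 1) * \<bar>vd r\<bar> powr (m-1) / c1 powr \<gamma>) (at 0 within {0..<R})"
    using ev
  proof eventually_elim
    case (elim r)
    have dp: "0 < c1 powr \<gamma>" using c1 by simp
    have dl: "c1 powr \<gamma> \<le> (a r + gtrunc g kk (v r)) powr \<gamma>" using den_lower[of r] elim by auto
    have "norm (Fl r) = r powr (real N + \<alpha> - 1) * \<bar>vd r\<bar> powr (m-1) / (a r + gtrunc g kk (v r)) powr \<gamma>"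
      using elim abs_powr_mult[of "vd r" "m-1"] by (simp add: Fl_def abs_mult)
    also have "\<dots> \<le> r powr (real N + \<alpha> - 1) * \<bar>vd r\<bar> powr (m-1) / c1 powr \<gamma>"
      using dp dl by (intro divide_left_mono mult_pos_pos) auto
    finally show ?case .
  qed
  have "(vd \<longlongrightarrow> vd 0) (at 0 within {0..<R})"
    using vdc R0 by (auto simp: continuous_on_def)
  then have vdl: "(vd \<longlongrightarrow> 0) (at 0 within {0..<R})" using vd0 by simp
  have "((\<lambda>r. r powr (real N + \<alpha> - 1) * \<bar>vd r\<bar> powr (m-1) / c1 powr \<gamma>) \<longlongrightarrow> 0 powr (real N + \<alpha> - 1) * \<bar>0\<bar> powr (m-1) / c1 powr \<gamma>) (at 0 within {0..<R})"
    using n1 m1 ev c1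
    by (intro tendsto_intros vdl) (auto elim: eventually_mono)
  then show "((\<lambda>r. r powr (real N + \<alpha> - 1) * \<bar>vd r\<bar> powr (m-1) / c1 powr \<gamma>) \<longlongrightarrow> 0) (at 0 within {0..<R})"
    by simp
qed

lemma Fl_cont: "continuous_on {0..<R} Fl"
  unfolding continuous_on_eq_continuous_within
proof
  fix x assume x: "x \<in> {0..<R}"
  show "continuous (at x within {0..<R}) Fl"
  proof (cases "x = 0")
    case True
    then show ?thesis using Fl_lim Fl0 by (simp add: continuous_within)
  next
    case False
    then have "x \<in> {0<..<R}" using x by auto
    then have "(Fl has_real_derivative F' x) (at x)" using Fder by blast
    then have "isCont Fl x" by (rule DERIV_isCont)
    then show ?thesis by (rule continuous_at_imp_continuous_within)
  qed
qed

lemma hfun_pos: "0 < hfun q p t" by (simp add: hfun_def)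

lemma mF_nonneg: "0 \<le> - F' r" if "r \<in> {0<..<R}"
proof -
  have "0 \<le> \<xi> / hfun q p (supnorm R v)" using xi hfun_pos[of "supnorm R v"] by simp
  moreover have "- F' r = r powr (real N + \<beta> - 1) * (v r powr p + \<xi> / hfun q p (supnorm R v))"
    using Feq that by blast
  ultimately show ?thesis by simp
qed

lemma Fl_nonpos: "Fl r \<le> 0" if "0 \<le> r" "r < R"
proof -
  have "(\<lambda>s. - Fl s) 0 \<le> (\<lambda>s. - Fl s) r"
  proof (rule incr_from_deriv[where f="\<lambda>s. - Fl s" and f'="\<lambda>s. - F' s"])
    show "continuous_on {0..r} (\<lambda>s. - Fl s)"
      using that by (intro continuous_intros continuous_on_subset[OF Fl_cont]) auto
    show "((\<lambda>s. - Fl s) has_real_derivative - F' s) (at s)" if "0 < s" "s < r" for s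
    proof -
      have "s \<in> {0<..<R}" using that \<open>r < R\<close> by auto
      then have "(Fl has_real_derivative F' s) (at s)" using Fder by blast
      then show ?thesis by (rule DERIV_minus)
    qed
    show "0 \<le> - F' s" if "0 < s" "s < r" for s using mF_nonneg[of s] that \<open>r < R\<close> by auto
  qed (use that in auto)
  then show ?thesis using Fl0 by simp
qed

lemma vd_nonpos: "vd r \<le> 0" if "0 \<le> r" "r < R"
proof (rule ccontr)
  assume "\<not> vd r \<le> 0"
  then have vp: "0 < vd r" by simp
  have r0: "0 < r" using vp vd0 that by (cases "r = 0") auto
  have "0 < c1 powr \<gamma>" using c1 by simp
  then have dp: "0 < (a r + gtrunc g kk (v r)) powr \<gamma>" using den_lower[of r] that by linarith
  have "0 < r powr (real N + \<alpha> - 1) * (\<bar>vd r\<bar> powr (m - 2) * vd r) / (a r + gtrunc g kk (v r)) powr \<gamma>"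
    using vp r0 dp by (intro divide_pos_pos mult_pos_pos) auto
  then show False using Fl_nonpos[OF that] by (simp add: Fl_def)
qed

lemma v_deriv_at: "(v has_real_derivative vd s) (at s)" if "0 < s" "s < R"
proof -
  have "s \<in> {0..<R}" using that by auto
  then have "(v has_real_derivative vd s) (at s within {0..<R})" using vder by blast
  then have "(v has_real_derivative vd s) (at s within {0<..<R})"
    by (rule DERIV_subset) auto
  moreover have "at s within {0<..<R} = at s" using that by (intro at_within_open) auto
  ultimately show ?thesis by simp
qed

lemma v_anti: "v r \<le> v 0" if "0 \<le> r" "r \<le> R"
proof -
  have "(\<lambda>s. - v s) 0 \<le> (\<lambda>s. - v s) r"
  proof (rule incr_from_deriv[where f="\<lambda>s. - v s" and f'="\<lambda>s. - vd s"])
    show "continuous_on {0..r} (\<lambda>s. - v s)"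
      using that by (intro continuous_intros continuous_on_subset[OF vc]) auto
    show "((\<lambda>s. - v s) has_real_derivative - vd s) (at s)" if "0 < s" "s < r" for s
      using v_deriv_at[of s] that \<open>r \<le> R\<close> by (intro DERIV_minus) auto
    show "0 \<le> - vd s" if "0 < s" "s < r" for s using vd_nonpos[of s] that \<open>r \<le> R\<close> by auto
  qed (use that in auto)
  then show ?thesis by simp
qed

lemma v0pos: "0 < v 0"
proof -
  have "0 \<in> {0..<R}" using R0 by simp
  then show ?thesis using vpos by blast
qed

lemma sup_eq: "supnorm R v = v 0"
  unfolding supnorm_def
proof (rule cSup_eq_maximum)
  have "v 0 = \<bar>v 0\<bar>" using v0pos by simp
  moreover have "0 \<in> {0..R}" using R0 by simp
  ultimately show "v 0 \<in> (\<lambda>r. \<bar>v r\<bar>) ` {0..R}" by (rule image_eqI)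
  show "x \<le> v 0" if xin: "x \<in> (\<lambda>r. \<bar>v r\<bar>) ` {0..R}" for x
  proof -
    obtain r where r: "r \<in> {0..R}" "x = \<bar>v r\<bar>" using xin by blast
    have "0 \<le> v r" using v_nonneg[of r] r(1) by simp
    then have "x = v r" using r(2) by simp
    moreover have "v r \<le> v 0" using v_anti[of r] r(1) by simp
    ultimately show ?thesis by simp
  qed
qed

lemma MM_pos: "0 < MM" using v0pos by (simp add: MM_def)
lemma rho_nn: "0 \<le> rho" unfolding rho_def using MM_pos xi hfun_pos[of MM] by simp
lemma tt: "0 < tt" "tt \<le> 1" using rho_nn by (auto simp: tt_def)
lemma lam_pos: "0 < lam" using MM_pos rho_nn by (simp add: lam_def)
lemma LL_pos: "0 < LL" using lam_pos R0 by (simp add: LL_def)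
lemma lamx: "0 \<le> lam * x \<and> lam * x < R" if "0 \<le> x" "x < LL"
  using that lam_pos by (auto simp: LL_def field_simps)

lemma lam_id: "lam powr (\<beta> - \<alpha> + m) * (MM powr (p-m+1) * (1+rho)) = 1"
proof -
  have X: "0 < MM powr (p-m+1) * (1+rho)" using MM_pos rho_nn by simp
  have "lam powr (\<beta> - \<alpha> + m) = (MM powr (p-m+1) * (1+rho)) powr ((-1/(\<beta> - \<alpha> + m)) * (\<beta> - \<alpha> + m))"
    by (simp add: lam_def powr_powr)
  also have "(-1/(\<beta> - \<alpha> + m)) * (\<beta> - \<alpha> + m) = -1" using ba m1 by simp
  finally have "lam powr (\<beta> - \<alpha> + m) = (MM powr (p-m+1) * (1+rho)) powr (-1)" .
  then show ?thesis using X by (simp add: powr_minus field_simps)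
qed

lemma ws_cont: "continuous_on {0..<LL} ws"
proof -
  have "continuous_on {0..<LL} (\<lambda>x. v (lam*x))"
    by (rule continuous_on_compose2[OF vc]) (use lamx in \<open>force intro!: continuous_intros\<close>)+
  then show ?thesis unfolding ws_def by (intro continuous_intros) (use MM_pos in auto)
qed

lemma ws0: "ws 0 = 1" using MM_pos by (simp add: ws_def MM_def)

lemma ws_bnd: "0 < ws x \<and> ws x \<le> 1" if "0 \<le> x" "x < LL"
proof -
  have r: "lam*x \<in> {0..<R}" using lamx[OF that] by auto
  then have "0 < v (lam*x)" using vpos by blast
  moreover have "v (lam*x) \<le> MM" using v_anti[of "lam*x"] r by (simp add: MM_def)
  ultimately show ?thesis using MM_pos by (simp add: ws_def)
qed

lemma ws_deriv: "(ws has_real_derivative - us x) (at x)" if "0 < x" "x < LL"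
proof -
  have r: "0 < lam*x" "lam*x < R" using lamx[of x] that lam_pos by auto
  have "((\<lambda>x. v (lam*x)) has_real_derivative vd (lam*x) * lam) (at x)"
    using DERIV_chain2[OF v_deriv_at[OF r] DERIV_cmult[OF DERIV_ident, of lam]] by simp
  then have "((\<lambda>x. v (lam*x) / MM) has_real_derivative vd (lam*x) * lam / MM) (at x)"
    by (rule DERIV_cdivide)
  moreover have "vd (lam*x) * lam / MM = - us x" by (simp add: us_def)
  ultimately show ?thesis unfolding ws_def[abs_def] by simp
qed

lemma ys_cont: "continuous_on {0..<LL} ys"
proof -
  have "continuous_on {0..<LL} (\<lambda>x. Fl (lam*x))"
    by (rule continuous_on_compose2[OF Fl_cont]) (use lamx in \<open>auto intro!: continuous_intros\<close>)
  then show ?thesis unfolding ys_def by (intro continuous_intros) (use MM_pos lam_pos in auto)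
qed

lemma ys0: "ys 0 = 0" by (simp add: ys_def Fl0)

lemma Ds_pos: "0 < Ds x" if "0 \<le> x" "x < LL"
proof -
  have r: "0 \<le> lam*x" "lam*x \<le> R" using lamx[OF that] by auto
  have "0 < c1 powr \<gamma>" using c1 by simp
  then show ?thesis unfolding Ds_def using den_lower[OF r] by linarith
qed

lemma Ds_bnd: "c1 powr \<gamma> \<le> Ds x \<and> Ds x \<le> (c2 + g kk) powr \<gamma>" if "0 \<le> x" "x < LL"
proof -
  have r: "0 \<le> lam*x" "lam*x \<le> R" using lamx[OF that] by auto
  have gt: "0 \<le> gtrunc g kk (v (lam*x)) \<and> gtrunc g kk (v (lam*x)) \<le> g kk" using gt_bounds v_nonneg[OF r] by blast
  have "a (lam*x) \<le> c2" "c1 \<le> a (lam*x)" using abnd r by auto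
  then have "c1 \<le> a (lam*x) + gtrunc g kk (v (lam*x))" "a (lam*x) + gtrunc g kk (v (lam*x)) \<le> c2 + g kk"
    using gt by auto
  then show ?thesis unfolding Ds_def using c1 gam by (auto intro!: powr_mono2)
qed

lemma ys_deriv: "(ys has_real_derivative x powr ((real N + \<beta>) - 1) * (tt * ws x powr p + (1 - tt))) (at x)"
  if "0 < x" "x < LL"
proof -
  have r: "0 < lam*x" "lam*x < R" using lamx[of x] that lam_pos by auto
  define c where "c = lam powr ((real N + \<alpha>) - m) * MM powr (m-1)"
  have cpos: "0 < c" using lam_pos MM_pos by (simp add: c_def)
  have "lam*x \<in> {0<..<R}" using r by auto
  then have dF0: "(Fl has_real_derivative F' (lam*x)) (at (lam*x))" using Fder by blast
  have "((\<lambda>x. Fl (lam*x)) has_real_derivative F' (lam*x) * lam) (at x)"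
    using DERIV_chain2[OF dF0 DERIV_cmult[OF DERIV_ident, of lam]] by simp
  then have "((\<lambda>x. - Fl (lam*x) / c) has_real_derivative - (F' (lam*x) * lam) / c) (at x)"
    by (intro DERIV_cdivide DERIV_minus)
  then have d: "(ys has_real_derivative (- F' (lam*x)) * lam / c) (at x)"
    unfolding ys_def[abs_def] c_def by simp
  have e0: "- F' (lam*x) = (lam*x) powr (real N + \<beta> - 1) * (v (lam*x) powr p + \<xi> / hfun q p (supnorm R v))"
    using Feq \<open>lam*x \<in> {0<..<R}\<close> by blast
  have e1: "(lam*x) powr (real N + \<beta> - 1) = lam powr (real N + \<beta> - 1) * x powr (real N + \<beta> - 1)"
    by (rule powr_mult)
  have e2: "v (lam*x) powr p = MM powr p * ws x powr p"
  proof -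
    have "v (lam*x) = MM * ws x" using MM_pos by (simp add: ws_def)
    then show ?thesis by (simp add: powr_mult)
  qed
  have e3: "\<xi> / hfun q p (supnorm R v) = rho * MM powr p"
    using sup_eq MM_pos hfun_pos[of MM] by (simp add: rho_def MM_def)
  have e4: "lam * lam powr (real N + \<beta> - 1) / lam powr ((real N + \<alpha>) - m) = lam powr (\<beta> - \<alpha> + m)"
  proof -
    have "lam * lam powr (real N + \<beta> - 1) = lam powr (1 + (real N + \<beta> - 1))"
      using lam_pos by (intro powr_mult_base) simp
    also have "\<dots> / lam powr ((real N + \<alpha>) - m) = lam powr ((1 + (real N + \<beta> - 1)) - ((real N + \<alpha>) - m))"
      by (rule powr_diff[symmetric])
    also have "(1 + (real N + \<beta> - 1)) - ((real N + \<alpha>) - m) = \<beta> - \<alpha> + m" by simp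
    finally show ?thesis .
  qed
  have e5: "MM powr p / MM powr (m-1) = MM powr (p-m+1)"
  proof -
    have "MM powr p / MM powr (m-1) = MM powr (p - (m-1))" by (simp add: powr_diff)
    also have "p - (m-1) = p-m+1" by simp
    finally show ?thesis .
  qed
  define A where "A = lam powr (\<beta> - \<alpha> + m)"
  define B where "B = MM powr (p-m+1)"
  have AB: "A * B = 1/(1+rho)" using lam_id rho_nn by (simp add: A_def B_def field_simps)
  have lpos: "0 < lam powr ((real N + \<alpha>) - m)" "0 < MM powr (m-1)" using lam_pos MM_pos by auto
  have "(- F' (lam*x)) * lam / c
     = x powr (real N + \<beta> - 1) * (ws x powr p + rho) * ((lam * lam powr (real N + \<beta> - 1) / lam powr ((real N + \<alpha>) - m)) * (MM powr p / MM powr (m-1)))"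
    unfolding e0 e1 e2 e3 c_def using lpos by (simp add: field_simps)
  also have "\<dots> = x powr (real N + \<beta> - 1) * (ws x powr p + rho) * (A * B)"
    unfolding e4 e5 A_def B_def ..
  also have "\<dots> = x powr ((real N + \<beta>) - 1) * ((ws x powr p + rho) / (1+rho))"
    unfolding AB by simp
  also have "(ws x powr p + rho) / (1+rho) = tt * ws x powr p + (1 - tt)"
  proof -
    have ne: "1 + rho \<noteq> 0" using rho_nn by simp
    have a: "1 - 1/(1+rho) = rho/(1+rho)" using ne by (simp add: field_simps)
    have "tt * ws x powr p + (1 - tt) = ws x powr p / (1+rho) + rho/(1+rho)"
      unfolding tt_def a by simp
    also have "\<dots> = (ws x powr p + rho) / (1+rho)" by (simp add: add_divide_distrib)
    finally show ?thesis by simp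
  qed
  finally show ?thesis using d by simp
qed

lemma us_rel: "us x = (Ds x * ys x * x powr (1 - (real N + \<alpha>))) powr (1/(m-1))" if "0 < x" "x < LL"
proof -
  have r: "0 < lam*x" "lam*x < R" using lamx[of x] that lam_pos by auto
  define z where "z = vd (lam*x)"
  have z0: "z \<le> 0" using vd_nonpos[of "lam*x"] r by (simp add: z_def)
  have Dp: "0 < Ds x" using Ds_pos[of x] that by simp
  have lpos: "0 < lam powr ((real N + \<alpha>) - m)" "0 < MM powr (m-1)" using lam_pos MM_pos by auto
  have zz: "\<bar>z\<bar> powr (m - 2) * z = - (\<bar>z\<bar> powr (m-1))"
  proof -
    have "\<bar>z\<bar> powr (m - 1 - 1) * \<bar>z\<bar> = \<bar>z\<bar> powr (m-1)" by (rule abs_powr_mult)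
    moreover have "m - 1 - 1 = m - 2" by simp
    ultimately show ?thesis using z0 by simp
  qed
  have Flr: "Fl (lam*x) = - ((lam*x) powr (real N + \<alpha> - 1) * \<bar>z\<bar> powr (m-1) / Ds x)"
    unfolding Fl_def Ds_def z_def[symmetric] zz by simp
  have xx: "x powr (real N + \<alpha> - 1) * x powr (1 - (real N + \<alpha>)) = 1"
    using that by (simp add: powr_add[symmetric])
  have ll: "lam powr (real N + \<alpha> - 1) / lam powr ((real N + \<alpha>) - m) = lam powr (m-1)"
  proof -
    have "lam powr (real N + \<alpha> - 1) / lam powr ((real N + \<alpha>) - m) = lam powr ((real N + \<alpha> - 1) - ((real N + \<alpha>) - m))"
      by (simp add: powr_diff)
    also have "(real N + \<alpha> - 1) - ((real N + \<alpha>) - m) = m - 1" by simp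
    finally show ?thesis .
  qed
  have usz: "us x = lam * \<bar>z\<bar> / MM" using z0 by (simp add: us_def z_def)
  have us0: "0 \<le> us x" using usz lam_pos MM_pos by simp
  have "Ds x * ys x * x powr (1 - (real N + \<alpha>))
      = (x powr (real N + \<alpha> - 1) * x powr (1 - (real N + \<alpha>))) * (lam powr (real N + \<alpha> - 1) / lam powr ((real N + \<alpha>) - m)) * \<bar>z\<bar> powr (m-1) / MM powr (m-1)"
    unfolding ys_def Flr powr_mult using Dp lpos by (simp add: field_simps)
  also have "\<dots> = lam powr (m-1) * \<bar>z\<bar> powr (m-1) / MM powr (m-1)" unfolding xx ll by simp
  also have "\<dots> = us x powr (m-1)" unfolding usz by (simp add: powr_mult powr_divide)
  finally have "Ds x * ys x * x powr (1 - (real N + \<alpha>)) = us x powr (m-1)" .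
  then have "(Ds x * ys x * x powr (1 - (real N + \<alpha>))) powr (1/(m-1)) = us x powr ((m-1) * (1/(m-1)))"
    by (simp add: powr_powr)
  also have "(m-1) * (1/(m-1)) = 1" using m1 by simp
  finally show ?thesis using us0 by simp
qed

lemma D0pos: "0 < (a 0 + g kk) powr \<gamma>"
proof -
  have "c1 \<le> a 0" using abnd by auto
  moreover have "0 \<le> g kk" using gnn kk by auto
  ultimately show ?thesis using c1 by simp
qed

lemma core_hyps: "1 < m" "m < real N + \<alpha>" "0 < (real N + \<beta>) - (real N + \<alpha>) + 1" "m - 1 < p"
  "(p+1)*((real N + \<alpha>) - m) < m*(real N + \<beta>)" "0 < c1 powr \<gamma>" "c1 powr \<gamma> \<le> (c2 + g kk) powr \<gamma>"
  "0 < (a 0 + g kk) powr \<gamma>"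
proof -
  show "1 < m" "m < real N + \<alpha>" "0 < (real N + \<beta>) - (real N + \<alpha>) + 1" "m - 1 < p"
    "(p+1)*((real N + \<alpha>) - m) < m*(real N + \<beta>)" using m1 nam ba pm crit by auto
  show "0 < c1 powr \<gamma>" using c1 by simp
  have "0 \<le> g kk" using gnn kk by auto
  then show "c1 powr \<gamma> \<le> (c2 + g kk) powr \<gamma>" using c1 gam by (intro powr_mono2) auto
  show "0 < (a 0 + g kk) powr \<gamma>" by (rule D0pos)
qed

lemma scaled_SH: "SH (real N + \<alpha>) m (real N + \<beta>) p (c1 powr \<gamma>) ((c2 + g kk) powr \<gamma>) tt LL ws ys us Ds"
  unfolding SH_def[OF core_hyps]
  using LL_pos tt ws_cont ws0 ws_bnd ws_deriv ys_cont ys0 ys_deriv us_rel Ds_bnd by auto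

lemma final:
  fixes K \<eta> \<epsilon> L0 \<delta> :: real
  assumes core: "\<forall>t L w y u D. SH (real N + \<alpha>) m (real N + \<beta>) p (c1 powr \<gamma>) ((c2 + g kk) powr \<gamma>) t L w y u D \<longrightarrow> L0 \<le> L \<longrightarrow>
        (\<forall>x. 0 < x \<and> x \<le> K \<and> \<eta> \<le> w x \<longrightarrow> \<bar>(D x / ((a 0 + g kk) powr \<gamma>)) powr q1 m - 1\<bar> \<le> \<epsilon>) \<longrightarrow> False"
    and pos: "0 < K" "0 < \<eta>" "0 < L0" "0 < \<delta>"
    and del: "\<forall>r. 0 \<le> r \<and> r < \<delta> \<longrightarrow> \<bar>(((a r + g kk) powr \<gamma>) / ((a 0 + g kk) powr \<gamma>)) powr q1 m - 1\<bar> \<le> \<epsilon>"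
    and big: "MM > kk/\<eta>" "MM > (L0/R) powr ((\<beta>-\<alpha>+m)/(p-m+1))" "MM > (K/\<delta>) powr ((\<beta>-\<alpha>+m)/(p-m+1))"
  shows False
proof -
  define ke where "ke = (p-m+1)/(\<beta>-\<alpha>+m)"
  have bam: "0 < \<beta>-\<alpha>+m" using ba m1 by simp
  have pm1: "0 < p-m+1" using pm by simp
  have kepos: "0 < ke" using bam pm1 by (simp add: ke_def)
  have inv: "(\<beta>-\<alpha>+m)/(p-m+1) * ke = 1" using bam pm1 by (simp add: ke_def)
  have lam_le: "lam \<le> MM powr (-ke)"
  proof -
    have "lam \<le> (MM powr (p-m+1)) powr (-1/(\<beta> - \<alpha> + m))"
      unfolding lam_def using MM_pos rho_nn bam
      by (intro powr_mono2') (auto simp: mult_le_cancel_left1)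
    also have "\<dots> = MM powr (-ke)" by (simp add: powr_powr ke_def)
    finally show ?thesis .
  qed
  have Mk: "MM powr ke > X" if "MM > X powr ((\<beta>-\<alpha>+m)/(p-m+1))" "0 < X" for X
  proof -
    have "(X powr ((\<beta>-\<alpha>+m)/(p-m+1))) powr ke < MM powr ke"
      using that kepos by (intro powr_less_mono2) auto
    moreover have "(X powr ((\<beta>-\<alpha>+m)/(p-m+1))) powr ke = X"
    proof -
      have "(X powr ((\<beta>-\<alpha>+m)/(p-m+1))) powr ke = X powr ((\<beta>-\<alpha>+m)/(p-m+1) * ke)" by (rule powr_powr)
      also have "(\<beta>-\<alpha>+m)/(p-m+1) * ke = 1" by (rule inv)
      finally show ?thesis using that by simp
    qed
    ultimately show ?thesis by simp
  qed
  have MMke: "0 < MM powr ke" using MM_pos by simp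
  have lam_inv: "lam * MM powr ke \<le> 1"
  proof -
    have "lam * MM powr ke \<le> MM powr (-ke) * MM powr ke" using lam_le MMke by (intro mult_right_mono) auto
    also have "\<dots> = 1" using MM_pos by (simp add: powr_minus)
    finally show ?thesis .
  qed
  have L0LL: "L0 \<le> LL"
  proof -
    have "L0/R < MM powr ke" using Mk[of "L0/R"] big(2) pos R0 by auto
    then have "L0 < R * MM powr ke" using R0 by (simp add: field_simps)
    also have "R * MM powr ke \<le> R / lam" using lam_inv lam_pos R0 by (simp add: field_simps)
    finally show ?thesis by (simp add: LL_def)
  qed
  have lamK: "lam * K < \<delta>"
  proof -
    have "K/\<delta> < MM powr ke" using Mk[of "K/\<delta>"] big(3) pos by auto
    then have "K < \<delta> * MM powr ke" using pos by (simp add: field_simps)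
    then have "lam * K < lam * (\<delta> * MM powr ke)" using lam_pos by simp
    also have "\<dots> = \<delta> * (lam * MM powr ke)" by simp
    also have "\<dots> \<le> \<delta>" using lam_inv pos by (simp add: mult_le_cancel_left1)
    finally show ?thesis .
  qed
  have Meta: "kk < MM * \<eta>" using big(1) pos by (simp add: field_simps)
  have closeness: "\<forall>x. 0 < x \<and> x \<le> K \<and> \<eta> \<le> ws x \<longrightarrow> \<bar>(Ds x / ((a 0 + g kk) powr \<gamma>)) powr q1 m - 1\<bar> \<le> \<epsilon>"
  proof (intro allI impI)
    fix x assume x: "0 < x \<and> x \<le> K \<and> \<eta> \<le> ws x"
    have "MM * \<eta> \<le> MM * ws x" using x MM_pos by (intro mult_left_mono) auto
    also have "MM * ws x = v (lam*x)" using MM_pos by (simp add: ws_def)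
    finally have "kk \<le> v (lam*x)" using Meta by simp
    then have "gtrunc g kk (v (lam*x)) = g kk" by (simp add: gtrunc_def min_def)
    then have Dx: "Ds x = (a (lam*x) + g kk) powr \<gamma>" by (simp add: Ds_def)
    have h: "lam * x \<le> lam * K" using x lam_pos by (intro mult_left_mono) auto
    have h1: "lam*x < \<delta>" using h lamK by linarith
    have h2: "0 \<le> lam*x" using x lam_pos by simp
    from h1 h2 have "0 \<le> lam*x \<and> lam*x < \<delta>" by simp
    then show "\<bar>(Ds x / ((a 0 + g kk) powr \<gamma>)) powr q1 m - 1\<bar> \<le> \<epsilon>" using del Dx by auto
  qed
  show False using core scaled_SH L0LL closeness by blast
qed

end
end


theorem theorem5p1:
  fixes N :: nat and R m p \<gamma> \<alpha> \<beta> q c1 c2 :: real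
    and g a :: "real \<Rightarrow> real"
  assumes "N \<ge> 1" and "R > 0" and "m > 1" and "real N > m" and "p > 1"
    and "0 < \<gamma>" and "\<gamma> < m - 1"
    and "real N + \<alpha> - m > 0" and "\<beta> - \<alpha> + 1 > 0"
    and "m - 1 < p" and "p < m * (real N + \<beta>) / (real N + \<alpha> - m) - 1"
    and "continuous_on {0..} g" and "\<forall>s\<ge>0. g s \<ge> 0" and "mono_on {0..} g"
    and "((\<lambda>s. g s / s) \<longlongrightarrow> 1) at_top"
    and "continuous_on {0..} a" and "0 < c1" and "c1 \<le> c2"
    and "\<forall>t\<ge>0. c1 \<le> a t \<and> a t \<le> c2"
    and "q > p"
  shows "\<forall>k::nat. k \<ge> 1 \<longrightarrow> (\<exists>C>0. \<forall>\<xi>\<ge>0. \<forall>v.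
           positive_solution N R m p \<gamma> \<alpha> \<beta> q a g (real k) \<xi> v \<longrightarrow> supnorm R v \<le> C)"
proof (intro allI impI)
  fix k :: nat assume k1: "k \<ge> 1"
  have R0: "R > 0" and m1: "m > 1" and nam: "0 < real N + \<alpha> - m" and ba: "0 < \<beta> - \<alpha> + 1"
    and pm: "m - 1 < p" and gam: "0 < \<gamma>" and c1: "0 < c1" and c1c2: "c1 \<le> c2"
    and abnd: "\<forall>t\<ge>0. c1 \<le> a t \<and> a t \<le> c2" and ac: "continuous_on {0..} a"
    and gnn: "\<forall>s\<ge>0. 0 \<le> g s" and gmono: "mono_on {0..} g"
    using assms by auto
  have kk0: "0 \<le> real k" by simp
  have crit: "(p+1)*(real N + \<alpha> - m) < m*(real N + \<beta>)"
  proof -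
    have "p + 1 < m * (real N + \<beta>) / (real N + \<alpha> - m)" using assms(11) by simp
    then show ?thesis using nam by (simp add: pos_less_divide_eq)
  qed
  have gk: "0 \<le> g (real k)" using gnn by auto
  have Dlo: "0 < c1 powr \<gamma>" using c1 by simp
  have Dhi: "c1 powr \<gamma> \<le> (c2 + g (real k)) powr \<gamma>" using c1 c1c2 gk gam by (intro powr_mono2) auto
  have a0: "c1 \<le> a 0" using abnd by auto
  have D0: "0 < (a 0 + g (real k)) powr \<gamma>" using a0 c1 gk by simp
  have nm: "m < real N + \<alpha>" using nam by simp
  have bn: "0 < (real N + \<beta>) - (real N + \<alpha>) + 1" using ba by simp
  obtain K \<eta> \<epsilon> L0 where KP: "0 < K" "0 < \<eta>" "0 < \<epsilon>" "0 < L0"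
    and core: "\<forall>t L w y u D. SH (real N + \<alpha>) m (real N + \<beta>) p (c1 powr \<gamma>) ((c2 + g (real k)) powr \<gamma>) t L w y u D \<longrightarrow> L0 \<le> L \<longrightarrow>
        (\<forall>x. 0 < x \<and> x \<le> K \<and> \<eta> \<le> w x \<longrightarrow> \<bar>(D x / ((a 0 + g (real k)) powr \<gamma>)) powr q1 m - 1\<bar> \<le> \<epsilon>) \<longrightarrow> False"
    using core_exists[OF m1 nm bn pm crit Dlo Dhi D0] by blast
  define \<phi> where "\<phi> = (\<lambda>r. (((a r + g (real k)) powr \<gamma>) / ((a 0 + g (real k)) powr \<gamma>)) powr q1 m)"
  have pc: "continuous_on {0..} \<phi>"
  proof -
    have pos: "0 < a r + g (real k)" if "r \<in> {0..}" for r using abnd that c1 gk by force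
    show ?thesis unfolding \<phi>_def
      by (intro continuous_intros ac) (use pos D0 in \<open>auto simp: less_imp_neq[symmetric]\<close>)
  qed
  have p0: "\<phi> 0 = 1" using D0 by (simp add: \<phi>_def)
  obtain \<delta> where dpos: "0 < \<delta>" and dprop: "\<forall>r\<in>{0..}. dist r 0 < \<delta> \<longrightarrow> dist (\<phi> r) (\<phi> 0) < \<epsilon>"
    using pc KP(3) unfolding continuous_on_iff by (metis atLeast_iff order_refl)
  have del: "\<forall>r. 0 \<le> r \<and> r < \<delta> \<longrightarrow> \<bar>(((a r + g (real k)) powr \<gamma>) / ((a 0 + g (real k)) powr \<gamma>)) powr q1 m - 1\<bar> \<le> \<epsilon>"
  proof (intro allI impI)
    fix r assume r: "0 \<le> r \<and> r < \<delta>"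
    then have "dist (\<phi> r) (\<phi> 0) < \<epsilon>" using dprop by (auto simp: dist_real_def)
    then show "\<bar>(((a r + g (real k)) powr \<gamma>) / ((a 0 + g (real k)) powr \<gamma>)) powr q1 m - 1\<bar> \<le> \<epsilon>"
      using p0 by (simp add: dist_real_def \<phi>_def)
  qed
  define C where "C = 1 + max (real k/\<eta>) (max ((L0/R) powr ((\<beta>-\<alpha>+m)/(p-m+1))) ((K/\<delta>) powr ((\<beta>-\<alpha>+m)/(p-m+1))))"
  have Cpos: "0 < C" unfolding C_def using KP by (auto intro: add_pos_nonneg simp: max_def)
  show "\<exists>C>0. \<forall>\<xi>\<ge>0. \<forall>v. positive_solution N R m p \<gamma> \<alpha> \<beta> q a g (real k) \<xi> v \<longrightarrow> supnorm R v \<le> C"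
  proof (intro exI[of _ C] conjI allI impI)
    show "0 < C" by (rule Cpos)
    fix \<xi> :: real and v :: "real \<Rightarrow> real"
    assume xi: "0 \<le> \<xi>" and ps: "positive_solution N R m p \<gamma> \<alpha> \<beta> q a g (real k) \<xi> v"
    have vpos: "\<forall>r\<in>{0..<R}. v r > 0" and vc: "continuous_on {0..R} v" and vR: "v R = 0"
      using ps unfolding positive_solution_def by auto
    obtain vd F' where vder: "\<forall>r\<in>{0..<R}. (v has_real_derivative vd r) (at r within {0..<R})"
      and vdc: "continuous_on {0..<R} vd"
      and Fd: "\<forall>r\<in>{0<..<R}. ((\<lambda>r. r powr (real N + \<alpha> - 1) * (\<bar>vd r\<bar> powr (m - 2) * vd r)
                        / (a r + gtrunc g (real k) (v r)) powr \<gamma>) has_real_derivative F' r) (at r)"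
      and Feq: "\<forall>r\<in>{0<..<R}. - F' r = r powr (real N + \<beta> - 1) *
               (v r powr p + \<xi> / hfun q p (supnorm R v))"
      and vd0: "vd 0 = 0"
      using ps unfolding positive_solution_def Let_def by blast
    have Fder: "\<forall>r\<in>{0<..<R}. (Fl N m \<gamma> \<alpha> (real k) g a v vd has_real_derivative F' r) (at r)"
    proof -
      have "Fl N m \<gamma> \<alpha> (real k) g a v vd = (\<lambda>r. r powr (real N + \<alpha> - 1) * (\<bar>vd r\<bar> powr (m - 2) * vd r)
                        / (a r + gtrunc g (real k) (v r)) powr \<gamma>)" by (rule ext) (simp add: Fl_def)
      then show ?thesis using Fd by simp
    qed
    note H = R0 m1 nam ba pm gam c1 c1c2 abnd ac gnn gmono kk0 xi vpos vc vder vdc Fder Feq vd0 vR crit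
    show "supnorm R v \<le> C"
    proof (rule ccontr)
      assume "\<not> supnorm R v \<le> C"
      then have big: "C < MM v" using sup_eq[OF H] by (simp add: MM_def)
      have b1: "real k/\<eta> < MM v" "(L0/R) powr ((\<beta>-\<alpha>+m)/(p-m+1)) < MM v" "(K/\<delta>) powr ((\<beta>-\<alpha>+m)/(p-m+1)) < MM v"
        using big unfolding C_def by auto
      show False using final[OF H core KP(1) KP(2) KP(4) dpos del b1] .
    qed
  qed
qed

end
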